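(* Assume the setting below and let $J^\perp\in\mathbb{R}^{n\times n}$ be the random matrix $J^\perp_{ij}=\int_\mathcal{X}k^\perp(X_i,x)k^\perp(X_j,x)\,d\mu(x)$. If the smallest eigenvalue of $J^\perp$ is at least $c$ almost surely, then \[\mathbb{E}[R[f]-R[f']]\ge\frac{\|f^\star\|_\mu^2c+\sigma^2\|k^\perp\|^2_{L_2(\mu\otimes\mu)}}{(\sqrt nM_k+\rho/\sqrt n)^2}.\]
   Context: Setting: $\mathcal{G}$ is a compact, second countable, Hausdorff topological group with Haar probability measure $\lambda$, acting measurably on a nonempty Polish space $\mathcal{X}$; $\mu$ is a $\mathcal{G}$-invariant Borel probability measure on $\mathcal{X}$ with $\mathrm{supp}\,\mu=\mathcal{X}$. $k$ is a measurable symmetric positive definite kernel with RKHS $\mathcal{H}$, $k(\cdot,x)$ continuous for all $x$, $M_k=\sup_xk(x,x)<\infty$; $\iota:\mathcal{H}\to L_2(\mu)$ the inclusion; $\mathcal{O}h(x)=\int_\mathcal{G}h(gx)d\lambda(g)$; $k^\perp(x,y)=k(x,y)-\int_\mathcal{G}k(x,gy)d\lambda(g)$; $\|j\|^2_{L_2(\mu\otimes\mu)}=\iint j(x,y)^2d\mu(x)d\mu(y)$. The training sample $(X_i,Y_i)_{i=1}^n$ is i.i.d. with $X_i\sim\mu$, $Y_i=f^\star(X_i)+\xi_i$, $f^\star\in L_2(\mu)$ $\mathcal{G}$-invariant, $\mathbb{E}[\xi_i\mid X_1,\dots,X_n]=0$, $\mathbb{E}[\xi_i\xi_j\mid X_1,\dots,X_n]=\sigma^2\delta_{ij}<\infty$;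 $X\sim\mu$, $Y=f^\star(X)+\xi$ with $\mathbb{E}[\xi\mid X]=0$, $\mathbb{E}[\xi^2]=\sigma^2$. For $\rho>0$, $f(x)=k_{\mathbf{X}}(x)^\top(K+\rho I)^{-1}\mathbf{Y}$ is the kernel ridge regression solution ($K_{ij}=k(X_i,X_j)$, $k_{\mathbf{X}}(x)_i=k(X_i,x)$, $\mathbf{Y}_i=Y_i$), $\bar f=\mathcal{O}\iota f$, and $f'\in L_2(\mu)$ is any predictor with $R[f']\le R[\bar f]$, where $R[h]=\mathbb{E}[(h(X)-Y)^2]$ conditional on the training sample; the outer expectation is over the training sample. $\|\cdot\|_\mu$ is the $L_2(\mu)$ norm. *)

theory Defs
  imports "HOL-Probability.Probability"
begin

definition compact_topological_group ::
  "('g::{second_countable_topology,t2_space} \<Rightarrow> 'g \<Rightarrow> 'g) \<Rightarrow> 'g \<Rightarrow> ('g \<Rightarrow> 'g) \<Rightarrow> bool" where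
  "compact_topological_group gmul e ginv \<longleftrightarrow>
     (\<forall>a b c. gmul (gmul a b) c = gmul a (gmul b c)) \<and>
     (\<forall>a. gmul e a = a \<and> gmul a e = a) \<and>
     (\<forall>a. gmul (ginv a) a = e \<and> gmul a (ginv a) = e) \<and>
     continuous_on UNIV (\<lambda>p. gmul (fst p) (snd p)) \<and>
     continuous_on UNIV ginv \<and>
     compact (UNIV :: 'g set)"

definition haar_probability :: "'g::topological_space measure \<Rightarrow> ('g \<Rightarrow> 'g \<Rightarrow> 'g) \<Rightarrow> bool" where
  "haar_probability lam gmul \<longleftrightarrow>
     sets lam = sets borel \<and> prob_space lam \<and>
     (\<forall>g. \<forall>A\<in>sets borel. emeasure lam ((gmul g) ` A) = emeasure lam A)"

definition measurable_group_action ::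
  "('g::topological_space \<Rightarrow> 'g \<Rightarrow> 'g) \<Rightarrow> 'g \<Rightarrow> ('g \<Rightarrow> 'x::topological_space \<Rightarrow> 'x) \<Rightarrow> bool" where
  "measurable_group_action gmul e act \<longleftrightarrow>
     (\<forall>x. act e x = x) \<and> (\<forall>g h x. act (gmul g h) x = act g (act h x)) \<and>
     (\<lambda>p. act (fst p) (snd p)) \<in> measurable (borel \<Otimes>\<^sub>M borel) borel"

definition pd_kernel :: "('x::topological_space \<Rightarrow> 'x \<Rightarrow> real) \<Rightarrow> bool" where
  "pd_kernel k \<longleftrightarrow>
     (\<lambda>p. k (fst p) (snd p)) \<in> borel_measurable (borel \<Otimes>\<^sub>M borel) \<and>
     (\<forall>x y. k x y = k y x) \<and>
     (\<forall>(xs :: 'x list) (a :: nat \<Rightarrow> real).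
        (\<Sum>i<length xs. \<Sum>j<length xs. a i * a j * k (xs ! i) (xs ! j)) \<ge> 0)"

definition avg_op :: "'g measure \<Rightarrow> ('g \<Rightarrow> 'x \<Rightarrow> 'x) \<Rightarrow> ('x \<Rightarrow> real) \<Rightarrow> 'x \<Rightarrow> real" where
  "avg_op lam act h x = (\<integral>g. h (act g x) \<partial>lam)"

definition kperp :: "'g measure \<Rightarrow> ('g \<Rightarrow> 'x \<Rightarrow> 'x) \<Rightarrow> ('x \<Rightarrow> 'x \<Rightarrow> real) \<Rightarrow> 'x \<Rightarrow> 'x \<Rightarrow> real" where
  "kperp lam act k x y = k x y - (\<integral>g. k x (act g y) \<partial>lam)"

definition mat_eigenvalue :: "real^'n^'n \<Rightarrow> real \<Rightarrow> bool" where
  "mat_eigenvalue A lam_ev \<longleftrightarrow> (\<exists>v. v \<noteq> 0 \<and> A *v v = lam_ev *\<^sub>R v)"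

definition krr :: "('x \<Rightarrow> 'x \<Rightarrow> real) \<Rightarrow> real \<Rightarrow> ('n::finite \<Rightarrow> 'x) \<Rightarrow> ('n \<Rightarrow> real) \<Rightarrow> 'x \<Rightarrow> real" where
  "krr k rho Xs Ys x =
     (\<chi> i. k (Xs i) x) \<bullet>
       (matrix_inv ((\<chi> i j. k (Xs i) (Xs j)) + rho *\<^sub>R mat 1) *v (\<chi> i. Ys i))"

text \<open>Risk R[h] = E[(h(X) - Y)^2] with test pair X ~ mu, Y = fstar X + xi, on its own
  probability space Q (hence independent of the training sample).\<close>
definition risk :: "'t measure \<Rightarrow> ('t \<Rightarrow> 'x) \<Rightarrow> ('t \<Rightarrow> real) \<Rightarrow> ('x \<Rightarrow> real) \<Rightarrow> ('x \<Rightarrow> real) \<Rightarrow> real" where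
  "risk Q Xt xit fstar h = (\<integral>t. (h (Xt t) - (fstar (Xt t) + xit t))\<^sup>2 \<partial>Q)"

end

theory Submission
  imports Defs
begin

lemma grp_facts:
  assumes G: "compact_topological_group gmul e ginv"
  shows "\<And>a b c. gmul (gmul a b) c = gmul a (gmul b c)"
    "\<And>a. gmul e a = a" "\<And>a. gmul a e = a"
    "\<And>a. gmul (ginv a) a = e" "\<And>a. gmul a (ginv a) = e"
    "\<And>a. ginv (ginv a) = a"
    "\<And>a b. ginv (gmul a b) = gmul (ginv b) (ginv a)"
    "\<And>a b. gmul (ginv a) (gmul a b) = b"
    "\<And>a b. gmul a (gmul (ginv a) b) = b"
    "(\<lambda>p. gmul (fst p) (snd p)) \<in> borel_measurable (borel \<Otimes>\<^sub>M borel)"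
    "\<And>a. gmul a \<in> borel_measurable borel"
    "\<And>a. (\<lambda>x. gmul x a) \<in> borel_measurable borel"
    "ginv \<in> borel_measurable borel"
proof -
  note D = G[unfolded compact_topological_group_def]
  show as: "\<And>a b c. gmul (gmul a b) c = gmul a (gmul b c)"
    and l1: "\<And>a. gmul e a = a" and r1: "\<And>a. gmul a e = a"
    and li: "\<And>a. gmul (ginv a) a = e" and ri: "\<And>a. gmul a (ginv a) = e"
    using D by auto
  show c1: "\<And>a b. gmul (ginv a) (gmul a b) = b" by (metis as li l1)
  show c2: "\<And>a b. gmul a (gmul (ginv a) b) = b" by (metis as ri l1)
  show ii: "\<And>a. ginv (ginv a) = a" by (metis c2 li r1)
  show "\<And>a b. ginv (gmul a b) = gmul (ginv b) (ginv a)"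
    by (metis as c1 r1 ri)
  have cont: "continuous_on UNIV (\<lambda>p. gmul (fst p) (snd p))" and ci: "continuous_on UNIV ginv"
    using D by auto
  show "(\<lambda>p. gmul (fst p) (snd p)) \<in> borel_measurable (borel \<Otimes>\<^sub>M borel)"
    unfolding borel_prod by (rule borel_measurable_continuous_onI[OF cont])
  show "gmul a \<in> borel_measurable borel" for a
  proof -
    have "continuous_on UNIV (\<lambda>x. gmul (fst (a, x)) (snd (a, x)))"
      by (rule continuous_on_compose2[OF cont]) (auto intro!: continuous_intros)
    then show ?thesis by (intro borel_measurable_continuous_onI) simp
  qed
  show "(\<lambda>x. gmul x a) \<in> borel_measurable borel" for a
  proof -
    have "continuous_on UNIV (\<lambda>x. gmul (fst (x, a)) (snd (x, a)))"
      by (rule continuous_on_compose2[OF cont]) (auto intro!: continuous_intros)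
    then show ?thesis by (intro borel_measurable_continuous_onI) simp
  qed
  show "ginv \<in> borel_measurable borel" by (rule borel_measurable_continuous_onI[OF ci])
qed

lemma haar_facts:
  assumes G: "compact_topological_group gmul e ginv"
    and haar: "haar_probability lam gmul"
  shows "prob_space lam" "sets lam = sets borel" "space lam = UNIV"
    "\<And>a A. A \<in> sets borel \<Longrightarrow> emeasure lam (gmul a -` A) = emeasure lam A"
proof -
  note gf = grp_facts[OF G]
  show pl: "prob_space lam" and sl: "sets lam = sets borel" using haar unfolding haar_probability_def by auto
  show "space lam = UNIV" using sets_eq_imp_space_eq[OF sl] by simp
  show "emeasure lam (gmul a -` A) = emeasure lam A" if A: "A \<in> sets borel" for a A
  proof -
    have "gmul a -` A = gmul (ginv a) ` A"
      using gf by (auto simp: image_def) (metis gf(8))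
    then show ?thesis using haar A unfolding haar_probability_def by auto
  qed
qed

lemma haar_inv_right:
  assumes G: "compact_topological_group gmul e ginv"
    and haar: "haar_probability lam gmul"
  shows "\<And>A. A \<in> sets borel \<Longrightarrow> emeasure lam (ginv -` A) = emeasure lam A"
    "\<And>a A. A \<in> sets borel \<Longrightarrow> emeasure lam ((\<lambda>x. gmul x a) -` A) = emeasure lam A"
proof -
  note gf = grp_facts[OF G]
  note hf = haar_facts[OF G haar]
  interpret lam: prob_space lam by (rule hf(1))
  define nu where "nu = distr lam borel ginv"
  have snu: "sets nu = sets borel" by (simp add: nu_def)
  have spnu: "space nu = UNIV" by (simp add: nu_def)
  have meas_ginv: "ginv \<in> measurable lam borel"
    using gf(13) measurable_cong_sets[OF hf(2) refl] by blast
  have nu_em: "emeasure nu A = emeasure lam (ginv -` A)" if "A \<in> sets borel" for A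
    using that meas_ginv by (simp add: nu_def emeasure_distr hf(3))
  interpret nu: prob_space nu unfolding nu_def by (rule lam.prob_space_distr[OF meas_ginv])
  interpret pair_sigma_finite nu lam by unfold_locales
  have eq: "emeasure lam A = emeasure nu A" if A: "A \<in> sets borel" for A
  proof -
    define S where "S = (\<lambda>p. gmul (fst p) (snd p)) -` A"
    have S: "S \<in> sets (nu \<Otimes>\<^sub>M lam)"
    proof -
      have "(\<lambda>p. gmul (fst p) (snd p)) \<in> measurable (nu \<Otimes>\<^sub>M lam) borel"
        using gf(10) by (simp add: measurable_cong_sets[OF sets_pair_measure_cong[OF snu hf(2)] refl])
      from measurable_sets[OF this A] show ?thesis
        by (simp add: S_def space_pair_measure spnu hf(3))
    qed
    have "emeasure (nu \<Otimes>\<^sub>M lam) S = (\<integral>\<^sup>+ g. emeasure lam (Pair g -` S) \<partial>nu)"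
      by (rule lam.emeasure_pair_measure_alt[OF S])
    also have "\<dots> = (\<integral>\<^sup>+ g. emeasure lam A \<partial>nu)"
    proof (rule nn_integral_cong)
      fix g
      have "Pair g -` S = gmul g -` A" by (auto simp: S_def)
      then show "emeasure lam (Pair g -` S) = emeasure lam A" using hf(4)[OF A] by simp
    qed
    also have "\<dots> = emeasure lam A" by (simp add: nu.emeasure_space_1)
    finally have 1: "emeasure (nu \<Otimes>\<^sub>M lam) S = emeasure lam A" .
    have "emeasure (nu \<Otimes>\<^sub>M lam) S = (\<integral>\<^sup>+ h. emeasure nu ((\<lambda>g. (g, h)) -` S) \<partial>lam)"
      by (rule emeasure_pair_measure_alt2[OF S])
    also have "\<dots> = (\<integral>\<^sup>+ h. emeasure nu A \<partial>lam)"
    proof (rule nn_integral_cong)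
      fix h
      have mA: "(\<lambda>g. gmul g h) -` A \<in> sets borel"
        using measurable_sets[OF gf(12) A] by simp
      have "(\<lambda>g. (g, h)) -` S = (\<lambda>g. gmul g h) -` A" by (auto simp: S_def)
      then have "emeasure nu ((\<lambda>g. (g, h)) -` S) = emeasure lam (ginv -` ((\<lambda>g. gmul g h) -` A))"
        using nu_em[OF mA] by simp
      also have "ginv -` ((\<lambda>g. gmul g h) -` A) = gmul (ginv h) -` (ginv -` A)"
        by (auto simp: gf(7) gf(6))
      also have "emeasure lam \<dots> = emeasure lam (ginv -` A)"
        using hf(4) measurable_sets[OF gf(13) A] by simp
      also have "\<dots> = emeasure nu A" using nu_em[OF A] by simp
      finally show "emeasure nu ((\<lambda>g. (g, h)) -` S) = emeasure nu A" .
    qed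
    also have "\<dots> = emeasure nu A" by (simp add: lam.emeasure_space_1)
    finally show ?thesis using 1 by simp
  qed
  show inv: "emeasure lam (ginv -` A) = emeasure lam A" if A: "A \<in> sets borel" for A
    using eq[OF A] nu_em[OF A] by simp
  show "emeasure lam ((\<lambda>x. gmul x a) -` A) = emeasure lam A" if A: "A \<in> sets borel" for a A
  proof -
    have mA: "(\<lambda>g. gmul g a) -` A \<in> sets borel" using measurable_sets[OF gf(12) A] by simp
    have "emeasure lam ((\<lambda>x. gmul x a) -` A) = emeasure lam (ginv -` ((\<lambda>x. gmul x a) -` A))"
      using inv[OF mA] by simp
    also have "ginv -` ((\<lambda>g. gmul g a) -` A) = gmul (ginv a) -` (ginv -` A)"
      by (auto simp: gf(7) gf(6))
    also have "emeasure lam \<dots> = emeasure lam (ginv -` A)"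
      using hf(4) measurable_sets[OF gf(13) A] by simp
    also have "\<dots> = emeasure lam A" using inv[OF A] .
    finally show ?thesis .
  qed
qed

lemma haar_distr:
  assumes G: "compact_topological_group gmul e ginv"
    and haar: "haar_probability lam gmul"
  shows "distr lam borel (gmul a) = lam" "distr lam borel (\<lambda>x. gmul x a) = lam"
proof -
  note gf = grp_facts[OF G]
  note hf = haar_facts[OF G haar]
  show "distr lam borel (gmul a) = lam"
  proof (rule measure_eqI)
    show "sets (distr lam borel (gmul a)) = sets lam" using hf(2) by simp
    fix A assume "A \<in> sets (distr lam borel (gmul a))"
    then have A: "A \<in> sets borel" by simp
    have m: "gmul a \<in> measurable lam borel" using gf(11) measurable_cong_sets[OF hf(2) refl] by blast
    show "emeasure (distr lam borel (gmul a)) A = emeasure lam A"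
      using hf(4)[OF A] by (simp add: emeasure_distr[OF m A] hf(3))
  qed
  show "distr lam borel (\<lambda>x. gmul x a) = lam"
  proof (rule measure_eqI)
    show "sets (distr lam borel (\<lambda>x. gmul x a)) = sets lam" using hf(2) by simp
    fix A assume "A \<in> sets (distr lam borel (\<lambda>x. gmul x a))"
    then have A: "A \<in> sets borel" by simp
    have m: "(\<lambda>x. gmul x a) \<in> measurable lam borel" using gf(12) measurable_cong_sets[OF hf(2) refl] by blast
    show "emeasure (distr lam borel (\<lambda>x. gmul x a)) A = emeasure lam A"
      using haar_inv_right(2)[OF G haar A] by (simp add: emeasure_distr[OF m A] hf(3))
  qed
qed



lemma inner_mv_sum: "(u::real^'n) \<bullet> (A *v u) = (\<Sum>i\<in>UNIV. \<Sum>j\<in>UNIV. u$i * u$j * A$i$j)"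
  by (simp add: inner_vec_def matrix_vector_mult_def sum_distrib_left mult_ac)

lemma norm_mv_sq_bound:
  fixes K :: "real^'n^'n"
  assumes bnd: "\<And>i j. \<bar>K$i$j\<bar> \<le> M"
  shows "norm (K *v u) \<le> real CARD('n) * M * norm u"
proof -
  have M0: "M \<ge> 0" using bnd[of undefined undefined] by linarith
  have row: "norm (K$i) ^ 2 \<le> real CARD('n) * M^2" for i
  proof -
    have "norm (K$i) ^ 2 = (\<Sum>j\<in>UNIV. (K$i$j)^2)"
      by (simp only: power2_norm_eq_inner) (simp add: inner_vec_def power2_eq_square)
    also have "\<dots> \<le> (\<Sum>j\<in>(UNIV::'n set). M^2)"
      apply (rule sum_mono) using bnd by (metis abs_le_square_iff abs_of_nonneg M0 power2_abs)
    finally show ?thesis by simp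
  qed
  have "norm (K *v u) ^ 2 = (\<Sum>i\<in>UNIV. ((K *v u)$i)^2)"
    by (simp only: power2_norm_eq_inner) (simp add: inner_vec_def power2_eq_square)
  also have "\<dots> = (\<Sum>i\<in>UNIV. (K$i \<bullet> u)^2)" by (simp add: matrix_vector_mul_component)
  also have "\<dots> \<le> (\<Sum>i\<in>(UNIV::'n set). real CARD('n) * M^2 * norm u ^ 2)"
  proof (rule sum_mono)
    fix i
    have "(K$i \<bullet> u)^2 \<le> (norm (K$i) * norm u)^2"
      using Cauchy_Schwarz_ineq2[of "K$i" u] by (metis abs_ge_zero power2_abs power_mono)
    also have "\<dots> = norm (K$i)^2 * norm u ^2" by (simp add: power_mult_distrib)
    also have "\<dots> \<le> real CARD('n) * M^2 * norm u ^ 2"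
      by (rule mult_right_mono[OF row]) simp
    finally show "(K$i \<bullet> u)^2 \<le> real CARD('n) * M^2 * norm u ^ 2" .
  qed
  also have "\<dots> = (real CARD('n) * M * norm u)^2" by (simp add: power2_eq_square)
  finally show ?thesis
    using M0 by (metis mult_nonneg_nonneg norm_ge_zero of_nat_0_le_iff power2_le_imp_le)
qed

lemma ridge_facts:
  fixes K :: "real^'n^'n"
  assumes sym: "\<And>i j. K$i$j = K$j$i"
    and psd: "\<And>u. u \<bullet> (K *v u) \<ge> 0"
    and bnd: "\<And>i j. \<bar>K$i$j\<bar> \<le> M"
    and rho: "rho > 0"
  defines "C \<equiv> K + rho *\<^sub>R mat 1"
  shows "C ** matrix_inv C = mat 1" "matrix_inv C ** C = mat 1"
    "\<And>u. norm (C *v u) \<le> (real CARD('n) * M + rho) * norm u"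
    "\<And>u. rho * norm u \<le> norm (C *v u)"
    "transpose C = C"
proof -
  have Cu: "C *v u = K *v u + rho *\<^sub>R u" for u
  proof -
    have "(C *v u)$i = (K *v u + rho *\<^sub>R u)$i" for i
    proof -
      have "(C *v u)$i = (\<Sum>j\<in>UNIV. K$i$j * u$j + (if i = j then rho * u$j else 0))"
        unfolding C_def matrix_vector_mult_def mat_def vec_lambda_beta
        by (intro sum.cong) (auto simp: distrib_right)
      also have "\<dots> = (K *v u)$i + rho * u$i"
        by (simp add: sum.distrib matrix_vector_mult_def)
      finally show ?thesis by simp
    qed
    then show ?thesis by (simp add: vec_eq_iff)
  qed
  have lo: "rho * norm u \<le> norm (C *v u)" for u
  proof -
    have "rho * norm u ^ 2 \<le> u \<bullet> (C *v u)"
      using psd[of u] by (simp add: Cu inner_add_right power2_norm_eq_inner)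
    also have "\<dots> \<le> norm u * norm (C *v u)" using real_inner_class.Cauchy_Schwarz_ineq2[of u "C *v u"] by linarith
    finally have "rho * norm u ^ 2 \<le> norm u * norm (C *v u)" .
    then show ?thesis
      by (cases "norm u = 0") (auto simp: power2_eq_square mult_ac)
  qed
  then show "\<And>u. rho * norm u \<le> norm (C *v u)" .
  show "norm (C *v u) \<le> (real CARD('n) * M + rho) * norm u" for u
  proof -
    have "norm (C *v u) \<le> norm (K *v u) + norm (rho *\<^sub>R u)" unfolding Cu by (rule norm_triangle_ineq)
    also have "\<dots> \<le> real CARD('n) * M * norm u + rho * norm u"
      using norm_mv_sq_bound[OF bnd, of u] rho by simp
    finally show ?thesis by (simp add: algebra_simps)
  qed
  have inj: "inj ((*v) C)"
  proof (rule injI)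
    fix x y assume "C *v x = C *v y"
    then have "C *v (x - y) = 0" by (simp add: matrix_vector_mult_diff_distrib)
    then have "rho * norm (x - y) \<le> 0" using lo[of "x - y"] by simp
    then show "x = y" using rho by (simp add: mult_le_0_iff)
  qed
  have inv: "invertible C"
    unfolding invertible_left_inverse[symmetric]
    using inj by (simp add: invertible_eq_bij bij_def
        inj_matrix_vector_mult) (metis matrix_left_invertible_injective invertible_left_inverse invertible_eq_bij bij_def)
  then have "C ** matrix_inv C = mat 1 \<and> matrix_inv C ** C = mat 1"
    unfolding invertible_def matrix_inv_def by (rule someI_ex)
  then show "C ** matrix_inv C = mat 1" "matrix_inv C ** C = mat 1" by auto
  show "transpose C = C"
    by (simp add: C_def transpose_def vec_eq_iff mat_def sym)
qed

lemma sym_inner_mv: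
  fixes J :: "real^'n^'n"
  assumes sym: "\<And>i j. J$i$j = J$j$i"
  shows "u \<bullet> (J *v r) = r \<bullet> (J *v u)"
proof -
  have "u \<bullet> (J *v r) = (\<Sum>i\<in>UNIV. \<Sum>j\<in>UNIV. u$i * J$i$j * r$j)"
    by (simp add: inner_vec_def matrix_vector_mult_def sum_distrib_left mult_ac)
  also have "\<dots> = (\<Sum>j\<in>UNIV. \<Sum>i\<in>UNIV. u$i * J$i$j * r$j)" by (rule sum.swap)
  also have "\<dots> = r \<bullet> (J *v u)"
    by (simp add: inner_vec_def matrix_vector_mult_def sum_distrib_left mult_ac sym)
  finally show ?thesis .
qed

lemma rayleigh:
  fixes J :: "real^'n^'n"
  assumes sym: "\<And>i j. J$i$j = J$j$i"
    and eig: "\<forall>ev. mat_eigenvalue J ev \<longrightarrow> ev \<ge> c"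
  shows "u \<bullet> (J *v u) \<ge> c * norm u ^ 2"
proof -
  define q where "q = (\<lambda>u::real^'n. u \<bullet> (J *v u))"
  have qs: "q (a *\<^sub>R u) = a^2 * q u" for a u
    by (simp add: q_def matrix_vector_mult_scaleR power2_eq_square)
  have ne: "sphere (0::real^'n) 1 \<noteq> {}"
  proof -
    have "axis (undefined::'n) (1::real) \<in> sphere 0 1" by (simp add: norm_axis_1)
    then show ?thesis by blast
  qed
  have cont: "continuous_on (sphere 0 1) q"
    unfolding q_def by (intro continuous_intros matrix_vector_mult_linear_continuous_on[THEN continuous_on_compose2]) auto
  obtain u0 where u0: "u0 \<in> sphere 0 1" and min: "\<And>y. y \<in> sphere 0 1 \<Longrightarrow> q u0 \<le> q y"
    using continuous_attains_inf[OF compact_sphere ne cont] by blast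
  define m where "m = q u0"
  have lb: "q u \<ge> m * norm u ^ 2" for u
  proof (cases "u = 0")
    case True then show ?thesis by (simp add: q_def)
  next
    case False
    then have nz: "norm u > 0" by simp
    have "m \<le> q ((1 / norm u) *\<^sub>R u)" unfolding m_def by (rule min) (use nz in simp)
    also have "\<dots> = q u / norm u ^ 2" by (simp add: qs power2_eq_square field_simps)
    finally show ?thesis using nz by (simp add: field_simps)
  qed
  define r where "r = J *v u0 - m *\<^sub>R u0"
  define a where "a = r \<bullet> r"
  define b where "b = q r - m * norm r ^ 2"
  have b0: "b \<ge> 0" using lb[of r] by (simp add: b_def)
  have exp: "q (u0 + t *\<^sub>R r) - m * norm (u0 + t *\<^sub>R r) ^ 2 = 2 * t * a + t^2 * b" for t
  proof -
    have s1: "u0 \<bullet> (J *v r) = r \<bullet> (J *v u0)" by (rule sym_inner_mv[OF sym])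
    have "q (u0 + t *\<^sub>R r) = q u0 + 2 * t * (r \<bullet> (J *v u0)) + t^2 * q r"
      using s1 by (simp add: q_def matrix_vector_right_distrib matrix_vector_mult_scaleR
          inner_add_left inner_add_right power2_eq_square algebra_simps)
    moreover have "norm (u0 + t *\<^sub>R r) ^ 2 = norm u0 ^ 2 + 2 * t * (r \<bullet> u0) + t^2 * norm r ^ 2"
      unfolding power2_norm_eq_inner by (simp add: inner_add_left inner_add_right power2_eq_square
          algebra_simps inner_commute)
    moreover have "norm u0 = 1" using u0 by simp
    moreover have "r \<bullet> (J *v u0) = a + m * (r \<bullet> u0)" by (simp add: a_def r_def inner_diff_right)
    ultimately show ?thesis unfolding b_def m_def by (simp add: algebra_simps power2_eq_square)
  qed
  have a0: "a = 0"
  proof (rule ccontr)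
    assume "a \<noteq> 0"
    then have ap: "a > 0" by (simp add: a_def)
    define t where "t = - a / (b + 1)"
    have st: "(b + 1) * t = - a" using b0 by (simp add: t_def)
    have "0 \<le> 2 * t * a + t^2 * b" using lb[of "u0 + t *\<^sub>R r"] exp[of t] by linarith
    then have "0 \<le> (b+1)^2 * (2 * t * a + t^2 * b)" by simp
    also have "(b+1)^2 * (2 * t * a + t^2 * b) = 2 * a * (b+1) * ((b+1)*t) + ((b+1)*t)^2 * b"
      by (simp add: power2_eq_square algebra_simps)
    also have "\<dots> = - (a^2 * (b + 2))" unfolding st by (simp add: power2_eq_square algebra_simps)
    also have "\<dots> < 0" using ap b0 by simp
    finally show False by simp
  qed
  then have "r = 0" by (simp add: a_def)
  then have "J *v u0 = m *\<^sub>R u0" by (simp add: r_def)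
  moreover have "u0 \<noteq> 0" using u0 by auto
  ultimately have "mat_eigenvalue J m" unfolding mat_eigenvalue_def by blast
  then have "m \<ge> c" using eig by blast
  then have "m * norm u ^ 2 \<ge> c * norm u ^ 2" by (simp add: mult_right_mono)
  then show ?thesis using lb[of u] by (simp add: q_def)
qed


lemma pd_kernel_psd:
  fixes xv :: "'n::finite \<Rightarrow> 'x::topological_space" and a :: "'n \<Rightarrow> real"
  assumes "pd_kernel k"
  shows "(\<Sum>i\<in>UNIV. \<Sum>j\<in>UNIV. a i * a j * k (xv i) (xv j)) \<ge> 0"
proof -
  obtain ls where ls: "set ls = (UNIV::'n set)" "distinct ls"
    using finite_distinct_list[OF finite_class.finite_UNIV] by blast
  have bij: "bij_betw (nth ls) {..<length ls} UNIV"
    using bij_betw_nth[OF ls(2) refl] ls(1) by simp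
  have "0 \<le> (\<Sum>m<length (map xv ls). \<Sum>m'<length (map xv ls).
      (\<lambda>m. a (ls ! m)) m * (\<lambda>m. a (ls ! m)) m' * k (map xv ls ! m) (map xv ls ! m'))"
  proof -
    have "\<forall>(xs :: 'x list) (a :: nat \<Rightarrow> real).
        (\<Sum>i<length xs. \<Sum>j<length xs. a i * a j * k (xs ! i) (xs ! j)) \<ge> 0"
      using assms unfolding pd_kernel_def by blast
    from this[rule_format, of "\<lambda>m. a (ls ! m)" "map xv ls"] show ?thesis .
  qed
  also have "\<dots> = (\<Sum>m<length ls. \<Sum>m'<length ls. a (ls ! m) * a (ls ! m') * k (xv (ls ! m)) (xv (ls ! m')))"
    by (intro sum.cong) auto
  also have "\<dots> = (\<Sum>i\<in>UNIV. \<Sum>j\<in>UNIV. a i * a j * k (xv i) (xv j))"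
    using sum.reindex_bij_betw[OF bij, of "\<lambda>i. \<Sum>j\<in>UNIV. a i * a j * k (xv i) (xv j)"]
      sum.reindex_bij_betw[OF bij, of "\<lambda>j. a _ * a j * k (xv _) (xv j)"]
    by simp
  finally show ?thesis .
qed

lemma quad_expand:
  fixes Ci J :: "real^'n^'n" and Y :: "real^'n"
  shows "(Ci *v Y) \<bullet> (J *v (Ci *v Y)) =
    (\<Sum>k\<in>UNIV. \<Sum>l\<in>UNIV. Y$k * Y$l * (\<Sum>i\<in>UNIV. \<Sum>j\<in>UNIV. Ci$i$k * Ci$j$l * J$i$j))"
proof -
  have "(Ci *v Y) \<bullet> (J *v (Ci *v Y)) = (\<Sum>i\<in>UNIV. \<Sum>j\<in>UNIV. (\<Sum>k\<in>UNIV. Ci$i$k * Y$k) * (\<Sum>l\<in>UNIV. Ci$j$l * Y$l) * J$i$j)"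
    by (simp add: inner_vec_def matrix_vector_mult_def sum_distrib_left sum_distrib_right mult_ac)
  also have "\<dots> = (\<Sum>i\<in>UNIV. \<Sum>j\<in>UNIV. \<Sum>l\<in>UNIV. \<Sum>k\<in>UNIV. Y$k * Y$l * (Ci$i$k * Ci$j$l * J$i$j))"
    by (simp add: sum_distrib_left sum_distrib_right mult_ac)
  also have "\<dots> = (\<Sum>i\<in>UNIV. \<Sum>j\<in>UNIV. \<Sum>k\<in>UNIV. \<Sum>l\<in>UNIV. Y$k * Y$l * (Ci$i$k * Ci$j$l * J$i$j))"
    by (rule sum.cong[OF refl], rule sum.cong[OF refl], rule sum.swap)
  also have "\<dots> = (\<Sum>i\<in>UNIV. \<Sum>k\<in>UNIV. \<Sum>j\<in>UNIV. \<Sum>l\<in>UNIV. Y$k * Y$l * (Ci$i$k * Ci$j$l * J$i$j))"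
    by (rule sum.cong[OF refl], rule sum.swap)
  also have "\<dots> = (\<Sum>k\<in>UNIV. \<Sum>i\<in>UNIV. \<Sum>j\<in>UNIV. \<Sum>l\<in>UNIV. Y$k * Y$l * (Ci$i$k * Ci$j$l * J$i$j))"
    by (rule sum.swap)
  also have "\<dots> = (\<Sum>k\<in>UNIV. \<Sum>i\<in>UNIV. \<Sum>l\<in>UNIV. \<Sum>j\<in>UNIV. Y$k * Y$l * (Ci$i$k * Ci$j$l * J$i$j))"
    by (rule sum.cong[OF refl], rule sum.cong[OF refl], rule sum.swap)
  also have "\<dots> = (\<Sum>k\<in>UNIV. \<Sum>l\<in>UNIV. \<Sum>i\<in>UNIV. \<Sum>j\<in>UNIV. Y$k * Y$l * (Ci$i$k * Ci$j$l * J$i$j))"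
    by (rule sum.cong[OF refl], rule sum.swap)
  also have "\<dots> = (\<Sum>k\<in>UNIV. \<Sum>l\<in>UNIV. Y$k * Y$l * (\<Sum>i\<in>UNIV. \<Sum>j\<in>UNIV. Ci$i$k * Ci$j$l * J$i$j))"
    by (simp add: sum_distrib_left)
  finally show ?thesis .
qed

lemma inv_facts:
  fixes C Ci :: "real^'n^'n"
  assumes CCi: "C ** Ci = mat 1" and CiC: "Ci ** C = mat 1"
    and up: "\<And>u. norm (C *v u) \<le> D * norm u"
    and lo: "\<And>u. rho * norm u \<le> norm (C *v u)"
    and symC: "transpose C = C" and rho: "rho > 0"
  shows "\<And>u. norm u \<le> D * norm (Ci *v u)"
    "\<And>u. rho * norm (Ci *v u) \<le> norm u"
    "\<And>i j. \<bar>Ci$i$j\<bar> \<le> 1 / rho"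
    "transpose Ci = Ci"
    "\<And>i j. Ci$i$j = det (\<chi> a b. if b = i then (if a = j then 1 else 0) else C$a$b) / det C"
proof -
  have CCiu: "C *v (Ci *v u) = u" for u by (simp add: matrix_vector_mul_assoc CCi)
  show "norm u \<le> D * norm (Ci *v u)" for u using up[of "Ci *v u"] CCiu[of u] by simp
  show lo2: "rho * norm (Ci *v u) \<le> norm u" for u using lo[of "Ci *v u"] CCiu[of u] by simp
  show "\<bar>Ci$i$j\<bar> \<le> 1 / rho" for i j
  proof -
    have "(Ci *v axis j 1)$i = Ci$i$j"
      by (simp add: matrix_vector_mult_def axis_def if_distrib cong: if_cong)
    then have "\<bar>Ci$i$j\<bar> \<le> norm (Ci *v axis j 1)" by (metis component_le_norm_cart)
    moreover have "rho * norm (Ci *v axis j (1::real)) \<le> 1" using lo2[of "axis j 1"] by (simp add: norm_axis_1)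
    ultimately have "rho * \<bar>Ci$i$j\<bar> \<le> 1" using rho
      by (meson less_imp_le mult_left_mono order_trans)
    then show ?thesis using rho by (simp add: field_simps)
  qed
  show "transpose Ci = Ci"
  proof -
    have "transpose Ci ** C = mat 1"
      using arg_cong[OF CCi, of transpose] by (simp add: matrix_transpose_mul symC transpose_mat)
    then have "transpose Ci = transpose Ci ** (C ** Ci)" using CCi by simp
    also have "\<dots> = (transpose Ci ** C) ** Ci" by (simp add: matrix_mul_assoc)
    also have "\<dots> = Ci" using \<open>transpose Ci ** C = mat 1\<close> by simp
    finally show ?thesis .
  qed
  show "Ci$i$j = det (\<chi> a b. if b = i then (if a = j then 1 else 0) else C$a$b) / det C" for i j
  proof -
    have inv: "invertible C" unfolding invertible_def using CCi CiC by blast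
    then have d: "det C \<noteq> 0" by (simp add: invertible_det_nz)
    have e: "C *v (Ci *v axis j 1) = axis j 1" by (rule CCiu)
    have f1: "(Ci *v axis j 1)$i = Ci$i$j"
      by (simp add: matrix_vector_mult_def axis_def if_distrib cong: if_cong)
    have f2: "Ci *v axis j 1 = (\<chi> k. det(\<chi> a b. if b=k then (axis j 1)$a else C$a$b) / det C)"
      using cramer[OF d] e by blast
    have f3: "(\<chi> a b. if b = i then (axis j (1::real))$a else C$a$b) = (\<chi> a b. if b = i then (if a = j then 1 else 0) else C$a$b)"
      by (intro arg_cong[where f=vec_lambda] ext) (simp add: axis_def)
    have "Ci$i$j = (Ci *v axis j 1)$i" using f1 by simp
    also have "\<dots> = det(\<chi> a b. if b=i then (axis j 1)$a else C$a$b) / det C"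
      by (subst f2) (simp only: vec_lambda_beta)
    also have "\<dots> = det (\<chi> a b. if b = i then (if a = j then 1 else 0) else C$a$b) / det C"
      by (simp only: f3)
    finally show ?thesis .
  qed
qed



locale setting =
  fixes gmul :: "'g::{second_countable_topology,t2_space} \<Rightarrow> 'g \<Rightarrow> 'g" and e :: 'g and ginv :: "'g \<Rightarrow> 'g"
    and lam :: "'g measure"
    and act :: "'g \<Rightarrow> 'x::polish_space \<Rightarrow> 'x"
    and mu :: "'x measure"
    and k :: "'x \<Rightarrow> 'x \<Rightarrow> real"
  assumes G: "compact_topological_group gmul e ginv"
    and haar: "haar_probability lam gmul"
    and action: "measurable_group_action gmul e act"
    and mu_sets: "sets mu = sets borel" and mu_prob: "prob_space mu"
    and mu_inv: "\<forall>g. \<forall>A\<in>sets borel. emeasure mu (act g -` A) = emeasure mu A"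
    and kernel: "pd_kernel k"
    and k_bdd: "bdd_above (range (\<lambda>x. k x x))"
begin

lemma lam_sets[measurable_cong]: "sets lam = sets borel"
  using haar_facts[OF G haar] by simp

lemma mu_sets'[measurable_cong]: "sets mu = sets borel" by (rule mu_sets)

lemma space_lam[simp]: "space lam = UNIV" using haar_facts[OF G haar] by simp
lemma space_mu[simp]: "space mu = UNIV" using sets_eq_imp_space_eq[OF mu_sets] by simp

sublocale lam: prob_space lam using haar_facts[OF G haar] by simp
sublocale mu: prob_space mu by (rule mu_prob)
sublocale ml: pair_sigma_finite mu lam by unfold_locales

lemma km: "(\<lambda>p. k (fst p) (snd p)) \<in> borel_measurable (borel \<Otimes>\<^sub>M borel)"
  using kernel unfolding pd_kernel_def by blast

lemma k_meas[measurable]: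
  assumes "f \<in> measurable M borel" "g \<in> measurable M borel"
  shows "(\<lambda>w. k (f w) (g w)) \<in> borel_measurable M"
  using measurable_compose[OF measurable_Pair[OF assms] km] by simp

lemma actm: "(\<lambda>p. act (fst p) (snd p)) \<in> measurable (borel \<Otimes>\<^sub>M borel) borel"
  using action unfolding measurable_group_action_def by blast

lemma act_meas[measurable]:
  assumes "f \<in> measurable M borel" "g \<in> measurable M borel"
  shows "(\<lambda>w. act (f w) (g w)) \<in> measurable M borel"
  using measurable_compose[OF measurable_Pair[OF assms] actm] by simp

lemma act_mul: "act (gmul g h) x = act g (act h x)"
  using action unfolding measurable_group_action_def by blast

lemma k_sym: "k x y = k y x"
  using kernel unfolding pd_kernel_def by blast

lemma pd2: "0 \<le> (\<Sum>i<length xs. \<Sum>j<length xs. a i * a j * k (xs ! i) (xs ! j))"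
  using kernel unfolding pd_kernel_def by blast

lemma kxx_nonneg: "k x x \<ge> 0"
  using pd2[of "\<lambda>_. 1" "[x]"] by simp

lemma kxx_le: "k x x \<le> (SUP x. k x x)"
  using k_bdd by (intro cSUP_upper) auto

lemma M_nonneg: "(SUP x. k x x) \<ge> 0"
  using kxx_nonneg[of undefined] kxx_le[of undefined] by linarith

lemma k_abs_le: "\<bar>k x y\<bar> \<le> (SUP x. k x x)"
proof -
  have "0 \<le> k x x + k y y + 2 * s * k x y" if "s = 1 \<or> s = -1" for s
  proof -
    have "0 \<le> k x x + s * k x y + (s * k y x + s * s * k y y)"
      using pd2[of "\<lambda>i. if i = 0 then 1 else s" "[x,y]"] by simp
    also have "\<dots> = k x x + k y y + 2 * s * k x y" using that k_sym[of y x] by auto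
    finally show ?thesis .
  qed
  from this[of 1] this[of "-1"] have "\<bar>k x y\<bar> \<le> (k x x + k y y) / 2" by auto
  also have "\<dots> \<le> (SUP x. k x x)" using kxx_le[of x] kxx_le[of y] by simp
  finally show ?thesis .
qed

lemma mu_distr: "distr mu borel (act g) = mu"
proof (rule measure_eqI)
  show "sets (distr mu borel (act g)) = sets mu" using mu_sets by simp
  fix A assume "A \<in> sets (distr mu borel (act g))"
  then have A: "A \<in> sets borel" by simp
  have m: "act g \<in> measurable mu borel" by measurable
  show "emeasure (distr mu borel (act g)) A = emeasure mu A"
    using mu_inv A by (simp add: emeasure_distr[OF m A])
qed

lemma avg_meas[measurable]:
  assumes [measurable]: "h \<in> borel_measurable borel"
  shows "avg_op lam act h \<in> borel_measurable borel"
proof -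
  have "(\<lambda>(x, g). h (act g x)) \<in> borel_measurable (borel \<Otimes>\<^sub>M lam)" by measurable
  then have "(\<lambda>x. \<integral>g. h (act g x) \<partial>lam) \<in> borel_measurable borel"
    by (rule lam.borel_measurable_lebesgue_integral)
  then show ?thesis unfolding avg_op_def[abs_def] .
qed

lemma lam_integrable_bounded:
  assumes "f \<in> borel_measurable borel" "\<And>g. \<bar>f g\<bar> \<le> (B::real)"
  shows "integrable lam f"
  using assms by (intro lam.integrable_const_bound[where B=B]) (auto simp: measurable_cong_sets[OF lam_sets refl])

lemma lam_integral_bound:
  assumes "f \<in> borel_measurable borel" "\<And>g. \<bar>f g\<bar> \<le> (B::real)"
  shows "\<bar>\<integral>g. f g \<partial>lam\<bar> \<le> B"
proof -
  have i: "integrable lam f" by (rule lam_integrable_bounded[OF assms])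
  have "\<bar>\<integral>g. f g \<partial>lam\<bar> \<le> (\<integral>g. \<bar>f g\<bar> \<partial>lam)" by (rule integral_abs_bound)
  also have "\<dots> \<le> (\<integral>g. B \<partial>lam)" using i assms(2) by (intro integral_mono) auto
  also have "\<dots> = B" using lam.prob_space by simp
  finally show ?thesis .
qed

lemma avg_bound:
  assumes [measurable]: "h \<in> borel_measurable borel" and b: "\<And>x. \<bar>h x\<bar> \<le> B"
  shows "\<bar>avg_op lam act h x\<bar> \<le> B"
  unfolding avg_op_def by (rule lam_integral_bound) (auto simp: b)

lemma avg_inv:
  assumes [measurable]: "h \<in> borel_measurable borel"
  shows "avg_op lam act h (act g x) = avg_op lam act h x"
proof -
  have m: "(\<lambda>g'. gmul g' g) \<in> measurable lam borel"
    using grp_facts(12)[OF G] measurable_cong_sets[OF lam_sets refl] by blast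
  have "avg_op lam act h (act g x) = (\<integral>g'. h (act (gmul g' g) x) \<partial>lam)"
    by (simp add: avg_op_def act_mul)
  also have "\<dots> = (\<integral>g'. h (act g' x) \<partial>distr lam borel (\<lambda>g'. gmul g' g))"
    by (rule integral_distr[symmetric, OF m]) measurable
  also have "\<dots> = avg_op lam act h x" by (simp add: haar_distr(2)[OF G haar] avg_op_def)
  finally show ?thesis .
qed


lemma avg_orth:
  assumes [measurable]: "h \<in> borel_measurable borel" and hb: "\<And>x. \<bar>h x\<bar> \<le> B"
    and [measurable]: "u \<in> borel_measurable borel" and ui: "integrable mu u"
    and uinv: "\<And>g. AE x in mu. u (act g x) = u x"
  shows "(\<integral>x. avg_op lam act h x * u x \<partial>mu) = (\<integral>x. h x * u x \<partial>mu)"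
proof -
  have B0: "B \<ge> 0" using hb[of undefined] by linarith
  have Fm[measurable]: "(\<lambda>(x, g). h (act g x) * u x) \<in> borel_measurable (mu \<Otimes>\<^sub>M lam)" by measurable
  have int: "integrable (mu \<Otimes>\<^sub>M lam) (\<lambda>(x, g). h (act g x) * u x)"
  proof (rule ml.Fubini_integrable)
    show "(\<lambda>(x, g). h (act g x) * u x) \<in> borel_measurable (mu \<Otimes>\<^sub>M lam)" by (rule Fm)
    show "integrable mu (\<lambda>x. \<integral>g. norm ((\<lambda>(x, g). h (act g x) * u x) (x, g)) \<partial>lam)"
    proof (rule Bochner_Integration.integrable_bound)
      show "integrable mu (\<lambda>x. B * \<bar>u x\<bar>)" using ui by auto
      have "(\<lambda>(x, g). norm (h (act g x) * u x)) \<in> borel_measurable (mu \<Otimes>\<^sub>M lam)" by measurable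
      then show "(\<lambda>x. \<integral>g. norm ((\<lambda>(x, g). h (act g x) * u x) (x, g)) \<partial>lam) \<in> borel_measurable mu"
        by (simp add: lam.borel_measurable_lebesgue_integral)
      show "AE x in mu. norm (\<integral>g. norm ((\<lambda>(x, g). h (act g x) * u x) (x, g)) \<partial>lam) \<le> norm (B * \<bar>u x\<bar>)"
      proof (rule AE_I2)
        fix x
        have "\<bar>\<integral>g. \<bar>h (act g x) * u x\<bar> \<partial>lam\<bar> \<le> B * \<bar>u x\<bar>"
          by (rule lam_integral_bound) (auto simp: abs_mult hb mult_right_mono)
        then show "norm (\<integral>g. norm ((\<lambda>(x, g). h (act g x) * u x) (x, g)) \<partial>lam) \<le> norm (B * \<bar>u x\<bar>)"
          using B0 by (simp add: abs_mult)
      qed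
    qed
    show "AE x in mu. integrable lam (\<lambda>g. (\<lambda>(x, g). h (act g x) * u x) (x, g))"
    proof (rule AE_I2)
      fix x
      have "integrable lam (\<lambda>g. h (act g x) * u x)"
        by (rule lam_integrable_bounded[where B="B * \<bar>u x\<bar>"]) (auto simp: abs_mult hb mult_right_mono)
      then show "integrable lam (\<lambda>g. (\<lambda>(x, g). h (act g x) * u x) (x, g))" by simp
    qed
  qed
  have "(\<integral>g. \<integral>x. h (act g x) * u x \<partial>mu \<partial>lam) = (\<integral>x. \<integral>g. h (act g x) * u x \<partial>lam \<partial>mu)"
    using ml.Fubini_integral[OF int] by simp
  also have "\<dots> = (\<integral>x. avg_op lam act h x * u x \<partial>mu)"
    by (simp add: avg_op_def)
  finally have 1: "(\<integral>g. \<integral>x. h (act g x) * u x \<partial>mu \<partial>lam) = (\<integral>x. avg_op lam act h x * u x \<partial>mu)" .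
  have 2: "(\<integral>x. h (act g x) * u x \<partial>mu) = (\<integral>x. h x * u x \<partial>mu)" for g
  proof -
    have m: "act g \<in> measurable mu borel" by measurable
    have "(\<integral>x. h (act g x) * u x \<partial>mu) = (\<integral>x. h (act g x) * u (act g x) \<partial>mu)"
      by (rule integral_cong_AE) (use uinv[of g] in auto)
    also have "\<dots> = (\<integral>x. h x * u x \<partial>distr mu borel (act g))"
      by (rule integral_distr[symmetric, OF m]) measurable
    also have "\<dots> = (\<integral>x. h x * u x \<partial>mu)" by (simp add: mu_distr)
    finally show ?thesis .
  qed
  show ?thesis using 1 2 lam.prob_space by simp
qed

lemma kperp_eq: "kperp lam act k y x = k y x - avg_op lam act (k y) x"
  by (simp add: kperp_def avg_op_def)

lemma kperp_pair_meas: "(\<lambda>p. kperp lam act k (fst p) (snd p)) \<in> borel_measurable (borel \<Otimes>\<^sub>M borel)"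
proof -
  have "(\<lambda>(p, g). k (fst p) (act g (snd p))) \<in> borel_measurable ((borel \<Otimes>\<^sub>M borel) \<Otimes>\<^sub>M lam)" by measurable
  then have "(\<lambda>p. \<integral>g. k (fst p) (act g (snd p)) \<partial>lam) \<in> borel_measurable (borel \<Otimes>\<^sub>M borel)"
    by (rule lam.borel_measurable_lebesgue_integral)
  then show ?thesis unfolding kperp_def by measurable
qed

lemma kperp_meas[measurable]:
  assumes "f \<in> measurable M borel" "g \<in> measurable M borel"
  shows "(\<lambda>w. kperp lam act k (f w) (g w)) \<in> borel_measurable M"
  using measurable_compose[OF measurable_Pair[OF assms] kperp_pair_meas] by simp

lemma kperp_bound: "\<bar>kperp lam act k y x\<bar> \<le> 2 * (SUP x. k x x)"
proof -
  have "\<bar>avg_op lam act (k y) x\<bar> \<le> (SUP x. k x x)"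
    by (rule avg_bound) (auto simp: k_abs_le)
  then show ?thesis using k_abs_le[of y x] by (simp add: kperp_eq)
qed


lemma lin_eq: "(\<chi> i. k (xv i) x) \<bullet> (\<alpha>::real^'n::finite) = (\<Sum>i\<in>UNIV. k (xv i) x * \<alpha>$i)"
  by (simp add: inner_vec_def)

lemma lin_meas[measurable]: "(\<lambda>x. (\<chi> i. k (xv i) x) \<bullet> (\<alpha>::real^'n::finite)) \<in> borel_measurable borel"
  unfolding lin_eq by measurable

lemma lin_bound: "\<bar>(\<chi> i. k (xv i) x) \<bullet> (\<alpha>::real^'n::finite)\<bar> \<le> (\<Sum>i\<in>UNIV. \<bar>\<alpha>$i\<bar>) * (SUP x. k x x)"
proof -
  have "\<bar>\<Sum>i\<in>UNIV. k (xv i) x * \<alpha>$i\<bar> \<le> (\<Sum>i\<in>UNIV. \<bar>k (xv i) x * \<alpha>$i\<bar>)" by (rule sum_abs)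
  also have "\<dots> \<le> (\<Sum>i\<in>UNIV. \<bar>\<alpha>$i\<bar> * (SUP x. k x x))"
    by (intro sum_mono) (simp add: abs_mult mult.commute mult_left_mono k_abs_le)
  finally show ?thesis unfolding lin_eq by (simp add: sum_distrib_right)
qed

lemma avg_lin: "avg_op lam act (\<lambda>x. (\<chi> i. k (xv i) x) \<bullet> (\<alpha>::real^'n::finite)) x
   = (\<Sum>i\<in>UNIV. avg_op lam act (k (xv i)) x * \<alpha>$i)"
proof -
  have int: "integrable lam (\<lambda>g. k (xv i) (act g x) * \<alpha>$i)" for i
    by (rule lam_integrable_bounded[where B="(SUP x. k x x) * \<bar>\<alpha>$i\<bar>"])
       (auto simp: abs_mult k_abs_le mult_right_mono)
  show ?thesis unfolding avg_op_def lin_eq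
    by (simp add: Bochner_Integration.integral_sum[OF int])
qed

lemma diff_lin: "(\<chi> i. k (xv i) x) \<bullet> (\<alpha>::real^'n::finite) - avg_op lam act (\<lambda>x. (\<chi> i. k (xv i) x) \<bullet> \<alpha>) x
   = (\<Sum>i\<in>UNIV. kperp lam act k (xv i) x * \<alpha>$i)"
  by (simp only: avg_lin) (simp add: lin_eq kperp_eq sum_subtractf left_diff_distrib)

lemma norm_diff_lin:
  fixes \<alpha> :: "real^'n::finite" and xv :: "'n \<Rightarrow> 'x"
  defines "f \<equiv> (\<lambda>x. (\<chi> i. k (xv i) x) \<bullet> \<alpha>)"
  shows "(\<integral>x. (f x - avg_op lam act f x)^2 \<partial>mu)
     = \<alpha> \<bullet> ((\<chi> i j. \<integral>x. kperp lam act k (xv i) x * kperp lam act k (xv j) x \<partial>mu) *v \<alpha>)"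
proof -
  have int: "integrable mu (\<lambda>x. \<alpha>$i * \<alpha>$j * (kperp lam act k (xv i) x * kperp lam act k (xv j) x))" for i j
  proof (rule mu.integrable_const_bound[where B="\<bar>\<alpha>$i * \<alpha>$j\<bar> * (2 * (SUP x. k x x) * (2 * (SUP x. k x x)))"])
    show "AE x in mu. norm (\<alpha>$i * \<alpha>$j * (kperp lam act k (xv i) x * kperp lam act k (xv j) x))
        \<le> \<bar>\<alpha>$i * \<alpha>$j\<bar> * (2 * (SUP x. k x x) * (2 * (SUP x. k x x)))"
    proof (intro AE_I2)
      fix x
      have "\<bar>kperp lam act k (xv i) x\<bar> * \<bar>kperp lam act k (xv j) x\<bar> \<le> (2 * (SUP x. k x x)) * (2 * (SUP x. k x x))"
        by (intro mult_mono kperp_bound) (auto simp: M_nonneg)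
      then show "norm (\<alpha>$i * \<alpha>$j * (kperp lam act k (xv i) x * kperp lam act k (xv j) x))
        \<le> \<bar>\<alpha>$i * \<alpha>$j\<bar> * (2 * (SUP x. k x x) * (2 * (SUP x. k x x)))"
        by (simp add: abs_mult mult_left_mono)
    qed
  qed measurable
  have int2: "integrable mu (\<lambda>x. \<Sum>j\<in>UNIV. \<alpha>$i * \<alpha>$j * (kperp lam act k (xv i) x * kperp lam act k (xv j) x))" for i
    using int by (intro Bochner_Integration.integrable_sum) auto
  have "(\<integral>x. (f x - avg_op lam act f x)^2 \<partial>mu)
      = (\<integral>x. (\<Sum>i\<in>UNIV. \<Sum>j\<in>UNIV. \<alpha>$i * \<alpha>$j * (kperp lam act k (xv i) x * kperp lam act k (xv j) x)) \<partial>mu)"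
    unfolding f_def diff_lin
    by (simp add: power2_eq_square sum_product mult_ac)
  also have "\<dots> = (\<Sum>i\<in>UNIV. \<Sum>j\<in>UNIV. \<alpha>$i * \<alpha>$j * (\<integral>x. kperp lam act k (xv i) x * kperp lam act k (xv j) x \<partial>mu))"
    by (simp add: Bochner_Integration.integral_sum[OF int2] Bochner_Integration.integral_sum[OF int])
  also have "\<dots> = \<alpha> \<bullet> ((\<chi> i j. \<integral>x. kperp lam act k (xv i) x * kperp lam act k (xv j) x \<partial>mu) *v \<alpha>)"
    by (simp add: inner_mv_sum)
  finally show ?thesis .
qed

lemma risk_diff_core:
  assumes [measurable]: "f \<in> borel_measurable borel" and fb: "\<And>x. \<bar>f x\<bar> \<le> B"
    and [measurable]: "fstar \<in> borel_measurable borel" and fs2: "integrable mu (\<lambda>x. (fstar x)^2)"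
    and finv: "\<And>g. AE x in mu. fstar (act g x) = fstar x"
  shows "(\<integral>x. (f x - fstar x)^2 \<partial>mu) - (\<integral>x. (avg_op lam act f x - fstar x)^2 \<partial>mu)
       = (\<integral>x. (f x - avg_op lam act f x)^2 \<partial>mu)"
proof -
  define Of where "Of = avg_op lam act f"
  have [measurable]: "Of \<in> borel_measurable borel" unfolding Of_def by measurable
  have Ob: "\<bar>Of x\<bar> \<le> B" for x unfolding Of_def by (rule avg_bound) (auto simp: fb)
  have B0: "B \<ge> 0" using fb[of undefined] by linarith
  have fs1: "integrable mu fstar"
    using mu.square_integrable_imp_integrable[OF _ fs2] by (simp add: measurable_cong_sets[OF mu_sets refl])
  have u1: "integrable mu (\<lambda>x. Of x - fstar x)"
  proof (rule Bochner_Integration.integrable_diff[OF _ fs1])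
    show "integrable mu Of" by (rule mu.integrable_const_bound[where B=B]) (auto simp: Ob)
  qed
  have uinv: "AE x in mu. Of (act g x) - fstar (act g x) = Of x - fstar x" for g
    using finv[of g] by eventually_elim (simp add: Of_def avg_inv)
  have orth: "(\<integral>x. Of x * (Of x - fstar x) \<partial>mu) = (\<integral>x. f x * (Of x - fstar x) \<partial>mu)"
    unfolding Of_def by (rule avg_orth[OF _ fb _ u1[unfolded Of_def]]) (use uinv in \<open>auto simp: Of_def\<close>)
  have i1: "integrable mu (\<lambda>x. c x * (Of x - fstar x))" if [measurable]: "c \<in> borel_measurable borel" and cb: "\<And>x. \<bar>c x\<bar> \<le> B" for c
  proof (rule Bochner_Integration.integrable_bound)
    show "integrable mu (\<lambda>x. B * (Of x - fstar x))" using u1 by auto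
    show "AE x in mu. norm (c x * (Of x - fstar x)) \<le> norm (B * (Of x - fstar x))"
      using cb B0 by (auto simp: abs_mult intro!: mult_right_mono)
  qed measurable
  have sq: "integrable mu (\<lambda>x. (Of x - fstar x)^2)"
  proof (rule Bochner_Integration.integrable_bound)
    show "integrable mu (\<lambda>x. 2 * B^2 + 2 * (fstar x)^2)" using fs2 by auto
    show "AE x in mu. norm ((Of x - fstar x)^2) \<le> norm (2 * B^2 + 2 * (fstar x)^2)"
    proof (rule AE_I2)
      fix x
      have "(Of x)^2 \<le> B^2" using Ob[of x] by (metis abs_le_square_iff abs_of_nonneg B0)
      moreover have "(Of x - fstar x)^2 \<le> 2 * (Of x)^2 + 2 * (fstar x)^2"
        using zero_le_square[of "Of x + fstar x"] by (simp add: power2_eq_square algebra_simps)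
      ultimately show "norm ((Of x - fstar x)^2) \<le> norm (2 * B^2 + 2 * (fstar x)^2)" by simp
    qed
  qed measurable
  have sqd: "integrable mu (\<lambda>x. (f x - Of x)^2)"
  proof (rule mu.integrable_const_bound[where B="(2*B)^2"])
    show "AE x in mu. norm ((f x - Of x)^2) \<le> (2*B)^2"
    proof (rule AE_I2)
      fix x have "\<bar>f x - Of x\<bar> \<le> 2 * B" using fb[of x] Ob[of x] by linarith
      then have "(f x - Of x)^2 \<le> (2*B)^2" using B0 by (metis abs_le_square_iff abs_of_nonneg mult_nonneg_nonneg zero_le_numeral)
      then show "norm ((f x - Of x)^2) \<le> (2*B)^2" by simp
    qed
  qed measurable
  have "(\<integral>x. (f x - fstar x)^2 \<partial>mu)
      = (\<integral>x. (f x - Of x)^2 + 2 * (f x * (Of x - fstar x)) - 2 * (Of x * (Of x - fstar x)) + (Of x - fstar x)^2 \<partial>mu)"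
    by (rule Bochner_Integration.integral_cong) (auto simp: power2_eq_square algebra_simps)
  also have "\<dots> = (\<integral>x. (f x - Of x)^2 \<partial>mu) + 2 * (\<integral>x. f x * (Of x - fstar x) \<partial>mu)
      - 2 * (\<integral>x. Of x * (Of x - fstar x) \<partial>mu) + (\<integral>x. (Of x - fstar x)^2 \<partial>mu)"
    using sqd sq i1[of f] i1[of Of] fb Ob by simp
  finally show ?thesis using orth unfolding Of_def by simp
qed

end


lemma abs_prod_le_sq: "\<bar>(a::real) * b\<bar> \<le> a^2 + b^2"
proof -
  have "2 * \<bar>a * b\<bar> \<le> a^2 + b^2"
    using zero_le_square[of "\<bar>a\<bar> - \<bar>b\<bar>"] by (simp add: power2_eq_square algebra_simps abs_mult)
  moreover have "0 \<le> a^2 + b^2" by simp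
  ultimately show ?thesis by linarith
qed

lemma risk_eq:
  fixes mu :: "'x::topological_space measure" and Q :: "'t measure" and sigma :: real
  assumes Q_prob: "prob_space Q"
    and Xt_meas: "Xt \<in> measurable Q borel"
    and Xt_distr: "distr Q borel Xt = mu"
    and xit_meas: "xit \<in> borel_measurable Q"
    and xit_L2: "integrable Q (\<lambda>t. (xit t)\<^sup>2)"
    and xit_mean: "AE t in Q. real_cond_exp Q (vimage_algebra (space Q) Xt borel) xit t = 0"
    and xit_var: "(\<integral>t. (xit t)\<^sup>2 \<partial>Q) = sigma\<^sup>2"
    and phim: "phi \<in> borel_measurable borel"
    and phi2: "integrable mu (\<lambda>x. (phi x)^2)"
  shows "(\<integral>t. (phi (Xt t) - xit t)^2 \<partial>Q) = (\<integral>x. (phi x)^2 \<partial>mu) + sigma^2"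
proof -
  interpret Q: prob_space Q by (rule Q_prob)
  define F where "F = vimage_algebra (space Q) Xt borel"
  have subalg: "subalgebra Q F"
    unfolding subalgebra_def F_def using sets_image_in_sets[OF refl Xt_meas] by simp
  interpret F: sigma_finite_subalgebra Q F
    by (rule finite_measure_subalgebra_is_sigma_finite)
       (simp add: finite_measure_subalgebra_def finite_measure_subalgebra_axioms_def subalg Q.finite_measure_axioms)
  have XtF: "Xt \<in> measurable F borel" unfolding F_def by (rule measurable_vimage_algebra1) simp
  have aF: "(\<lambda>t. phi (Xt t)) \<in> borel_measurable F" using measurable_compose[OF XtF phim] .
  have aQ: "(\<lambda>t. phi (Xt t)) \<in> borel_measurable Q" using measurable_compose[OF Xt_meas phim] .
  have sqm: "(\<lambda>x. (phi x)^2) \<in> borel_measurable borel" using phim by measurable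
  have a2: "integrable Q (\<lambda>t. (phi (Xt t))^2)"
    using phi2 integrable_distr_eq[OF Xt_meas sqm] Xt_distr by simp
  have a2i: "(\<integral>t. (phi (Xt t))^2 \<partial>Q) = (\<integral>x. (phi x)^2 \<partial>mu)"
    using integral_distr[OF Xt_meas sqm] Xt_distr by simp
  have ax: "integrable Q (\<lambda>t. phi (Xt t) * xit t)"
  proof (rule Bochner_Integration.integrable_bound)
    show "integrable Q (\<lambda>t. (phi (Xt t))^2 + (xit t)^2)" using a2 xit_L2 by auto
    show "(\<lambda>t. phi (Xt t) * xit t) \<in> borel_measurable Q" using aQ xit_meas by measurable
    show "AE t in Q. norm (phi (Xt t) * xit t) \<le> norm ((phi (Xt t))^2 + (xit t)^2)"
      by (intro AE_I2) (simp add: abs_prod_le_sq)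
  qed
  have "(\<integral>t. phi (Xt t) * xit t \<partial>Q) = (\<integral>t. phi (Xt t) * real_cond_exp Q F xit t \<partial>Q)"
    using F.real_cond_exp_intg(2)[OF ax aF xit_meas] by simp
  also have "\<dots> = (\<integral>t. 0 \<partial>Q)"
    by (rule integral_cong_AE) (use xit_mean aQ in \<open>auto simp: F_def\<close>)
  finally have ax0: "(\<integral>t. phi (Xt t) * xit t \<partial>Q) = 0" by simp
  have "(\<integral>t. (phi (Xt t) - xit t)^2 \<partial>Q) = (\<integral>t. (phi (Xt t))^2 - 2 * (phi (Xt t) * xit t) + (xit t)^2 \<partial>Q)"
    by (simp add: power2_eq_square algebra_simps)
  also have "\<dots> = (\<integral>t. (phi (Xt t))^2 \<partial>Q) - 2 * (\<integral>t. phi (Xt t) * xit t \<partial>Q) + (\<integral>t. (xit t)^2 \<partial>Q)"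
    using a2 ax xit_L2 by simp
  finally show ?thesis using a2i ax0 xit_var by simp
qed



lemma det_meas[measurable]:
  fixes A :: "'w \<Rightarrow> real^'n^'n"
  assumes [measurable]: "\<And>i j. (\<lambda>w. A w $ i $ j) \<in> borel_measurable M"
  shows "(\<lambda>w. det (A w)) \<in> borel_measurable M"
  unfolding det_def by (intro borel_measurable_sum borel_measurable_times borel_measurable_const borel_measurable_prod assms)

locale setting2 = setting gmul e ginv lam act mu k
  for gmul :: "'g::{second_countable_topology,t2_space} \<Rightarrow> 'g \<Rightarrow> 'g" and e ginv lam
    and act :: "'g \<Rightarrow> 'x::polish_space \<Rightarrow> 'x" and mu k +
  fixes rho :: real
  assumes rho_pos: "rho > 0"
begin

definition Cm :: "('n::finite \<Rightarrow> 'x) \<Rightarrow> real^'n^'n" where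
  "Cm xv = (\<chi> i j. k (xv i) (xv j)) + rho *\<^sub>R mat 1"

definition Jm :: "('n::finite \<Rightarrow> 'x) \<Rightarrow> real^'n^'n" where
  "Jm xv = (\<chi> i j. \<integral>x. kperp lam act k (xv i) x * kperp lam act k (xv j) x \<partial>mu)"

definition Bm :: "('n::finite \<Rightarrow> 'x) \<Rightarrow> 'n \<Rightarrow> 'n \<Rightarrow> real" where
  "Bm xv a b = (\<Sum>i\<in>UNIV. \<Sum>j\<in>UNIV. matrix_inv (Cm xv) $ i $ a * matrix_inv (Cm xv) $ j $ b * Jm xv $ i $ j)"

lemma Cm_facts:
  fixes xv :: "'n::finite \<Rightarrow> 'x"
  shows "Cm xv ** matrix_inv (Cm xv) = mat 1" "matrix_inv (Cm xv) ** Cm xv = mat 1"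
    "\<And>u. norm (Cm xv *v u) \<le> (real CARD('n) * (SUP x. k x x) + rho) * norm u"
    "\<And>u. rho * norm u \<le> norm (Cm xv *v u)"
    "transpose (Cm xv) = Cm xv"
proof -
  have psd: "u \<bullet> ((\<chi> i j. k (xv i) (xv j)) *v u) \<ge> 0" for u :: "real^'n"
    using pd_kernel_psd[OF kernel, of "\<lambda>i. u$i" xv] by (simp add: inner_mv_sum)
  have sym: "(\<chi> i j. k (xv i) (xv j))$i$j = (\<chi> i j. k (xv i) (xv j))$j$i" for i j
    by (simp add: k_sym)
  have bnd: "\<bar>(\<chi> i j. k (xv i) (xv j))$i$j\<bar> \<le> (SUP x. k x x)" for i j
    by (simp add: k_abs_le)
  note r = ridge_facts[OF sym psd bnd rho_pos]
  show "Cm xv ** matrix_inv (Cm xv) = mat 1" "matrix_inv (Cm xv) ** Cm xv = mat 1"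
    "\<And>u. norm (Cm xv *v u) \<le> (real CARD('n) * (SUP x. k x x) + rho) * norm u"
    "\<And>u. rho * norm u \<le> norm (Cm xv *v u)"
    "transpose (Cm xv) = Cm xv"
    unfolding Cm_def by (rule r)+
qed

lemma Ci_facts:
  fixes xv :: "'n::finite \<Rightarrow> 'x"
  shows "\<And>u. norm u \<le> (real CARD('n) * (SUP x. k x x) + rho) * norm (matrix_inv (Cm xv) *v u)"
    "\<And>i j. \<bar>matrix_inv (Cm xv) $ i $ j\<bar> \<le> 1 / rho"
    "transpose (matrix_inv (Cm xv)) = matrix_inv (Cm xv)"
    "\<And>i j. matrix_inv (Cm xv) $ i $ j = det (\<chi> a b. if b = i then (if a = j then 1 else 0) else Cm xv $ a $ b) / det (Cm xv)"
  using inv_facts[OF Cm_facts(1,2,3,4,5) rho_pos] by auto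

abbreviation "PB \<equiv> Pi\<^sub>M (UNIV::'n::finite set) (\<lambda>_. borel :: 'x measure)"

lemma comp_meas: "(\<lambda>xv. xv i) \<in> measurable (PB::('n::finite \<Rightarrow> 'x) measure) borel"
  by measurable

lemma Cm_meas[measurable]: "(\<lambda>xv. Cm xv $ a $ b) \<in> borel_measurable (PB::('n::finite \<Rightarrow> 'x) measure)"
proof -
  have "(\<lambda>xv. Cm xv $ a $ b) = (\<lambda>xv. k (xv a) (xv b) + rho * (if a = b then 1 else 0))"
    by (simp add: Cm_def mat_def fun_eq_iff)
  then show ?thesis by simp
qed

lemma Ci_meas[measurable]: "(\<lambda>xv. matrix_inv (Cm xv) $ a $ b) \<in> borel_measurable (PB::('n::finite \<Rightarrow> 'x) measure)"
proof -
  have e: "(\<lambda>xv. matrix_inv (Cm xv) $ a $ b) = (\<lambda>xv. det (\<chi> c d. if d = a then (if c = b then 1 else 0) else Cm xv $ c $ d) / det (Cm xv))"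
    using Ci_facts(4) by blast
  have [measurable]: "(\<lambda>xv. (\<chi> c d. if d = a then (if c = b then 1 else 0) else Cm xv $ c $ d) $ i $ j) \<in> borel_measurable (PB::('n::finite \<Rightarrow> 'x) measure)" for i j
    by (cases "j = a") simp_all
  show ?thesis unfolding e by (intro borel_measurable_divide det_meas) simp_all
qed

lemma psi2_meas: "(\<lambda>p. \<integral>x. kperp lam act k (fst p) x * kperp lam act k (snd p) x \<partial>mu) \<in> borel_measurable (borel \<Otimes>\<^sub>M borel)"
proof -
  have "(\<lambda>(p, x). kperp lam act k (fst p) x * kperp lam act k (snd p) x) \<in> borel_measurable ((borel \<Otimes>\<^sub>M borel) \<Otimes>\<^sub>M mu)"
    by measurable
  then show ?thesis by (rule mu.borel_measurable_lebesgue_integral)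
qed

lemma Jm_meas[measurable]: "(\<lambda>xv. Jm xv $ a $ b) \<in> borel_measurable (PB::('n::finite \<Rightarrow> 'x) measure)"
  unfolding Jm_def using measurable_compose[OF measurable_Pair[OF comp_meas comp_meas] psi2_meas] by simp

lemma Bm_meas[measurable]: "(\<lambda>xv. Bm xv a b) \<in> borel_measurable (PB::('n::finite \<Rightarrow> 'x) measure)"
  unfolding Bm_def by (intro borel_measurable_sum borel_measurable_times Ci_meas Jm_meas)



lemma Dp_pos: "(real CARD('n::finite) * (SUP x. k x x) + rho) > 0"
  using M_nonneg rho_pos by (simp add: add_nonneg_pos)

lemma quadJ: "a \<bullet> (Jm xv *v a) = (\<integral>x. (\<Sum>i\<in>UNIV. kperp lam act k (xv i) x * a$i)^2 \<partial>mu)"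
  for a :: "real^'n::finite"
  unfolding Jm_def norm_diff_lin[symmetric] diff_lin ..

lemma J_psd: "a \<bullet> (Jm xv *v a) \<ge> 0" for a :: "real^'n::finite"
  unfolding quadJ by simp

lemma J_sym: "Jm xv $ i $ j = Jm xv $ j $ i" for xv :: "'n::finite \<Rightarrow> 'x"
  by (simp add: Jm_def mult.commute)

lemma J_bound: "\<bar>Jm xv $ i $ j\<bar> \<le> 4 * (SUP x. k x x)^2" for xv :: "'n::finite \<Rightarrow> 'x"
proof -
  have b: "\<bar>kperp lam act k (xv i) x * kperp lam act k (xv j) x\<bar> \<le> 4 * (SUP x. k x x)^2" for x
  proof -
    have "\<bar>kperp lam act k (xv i) x\<bar> * \<bar>kperp lam act k (xv j) x\<bar> \<le> (2 * (SUP x. k x x)) * (2 * (SUP x. k x x))"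
      by (intro mult_mono kperp_bound) (auto simp: M_nonneg)
    then show ?thesis by (simp add: abs_mult power2_eq_square)
  qed
  have "\<bar>\<integral>x. kperp lam act k (xv i) x * kperp lam act k (xv j) x \<partial>mu\<bar> \<le> (\<integral>x. \<bar>kperp lam act k (xv i) x * kperp lam act k (xv j) x\<bar> \<partial>mu)"
    by (rule integral_abs_bound)
  also have "\<dots> \<le> (\<integral>x. 4 * (SUP x. k x x)^2 \<partial>mu)"
  proof (rule integral_mono)
    show "integrable mu (\<lambda>x. \<bar>kperp lam act k (xv i) x * kperp lam act k (xv j) x\<bar>)"
      by (rule mu.integrable_const_bound[where B="4 * (SUP x. k x x)^2"]) (simp add: b, measurable)
  qed (auto simp: b)
  also have "\<dots> = 4 * (SUP x. k x x)^2" using mu.prob_space by simp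
  finally show ?thesis by (simp add: Jm_def)
qed

definition "Bd = real CARD('n::finite) * real CARD('n) * (1 / rho * (1 / rho) * (4 * (SUP x. k x x)^2))"

lemma B_bound: "\<bar>Bm (xv :: 'n::finite \<Rightarrow> 'x) a b\<bar> \<le> Bd TYPE('n)"
proof -
  have e: "\<bar>matrix_inv (Cm xv) $ i $ a * matrix_inv (Cm xv) $ j $ b * Jm xv $ i $ j\<bar> \<le> 1 / rho * (1 / rho) * (4 * (SUP x. k x x)^2)" for i j
    unfolding abs_mult by (intro mult_mono Ci_facts(2) J_bound) (auto simp: rho_pos less_imp_le)
  have "\<bar>Bm xv a b\<bar> \<le> (\<Sum>i\<in>UNIV. \<Sum>j\<in>UNIV. \<bar>matrix_inv (Cm xv) $ i $ a * matrix_inv (Cm xv) $ j $ b * Jm xv $ i $ j\<bar>)"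
    unfolding Bm_def by (rule order_trans[OF sum_abs sum_mono[OF sum_abs]])
  also have "\<dots> \<le> (\<Sum>i\<in>(UNIV::'n set). \<Sum>j\<in>(UNIV::'n set). 1 / rho * (1 / rho) * (4 * (SUP x. k x x)^2))"
    by (intro sum_mono e)
  finally show ?thesis by (simp add: Bd_def)
qed


lemma norm_sq_sum: "norm (v::real^'n::finite) ^ 2 = (\<Sum>i\<in>UNIV. (v$i)^2)"
  by (simp only: power2_norm_eq_inner) (simp add: inner_vec_def power2_eq_square)

lemma sqsum_int: "integrable mu (\<lambda>x. (\<Sum>i\<in>UNIV. kperp lam act k ((xv::'n::finite \<Rightarrow> 'x) i) x * a i)^2)"
proof (rule mu.integrable_const_bound[where B="(\<Sum>i\<in>UNIV. 2 * (SUP x. k x x) * \<bar>a i\<bar>)^2"])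
  show "AE x in mu. norm ((\<Sum>i\<in>UNIV. kperp lam act k (xv i) x * a i)^2) \<le> (\<Sum>i\<in>UNIV. 2 * (SUP x. k x x) * \<bar>a i\<bar>)^2"
  proof (rule AE_I2)
    fix x
    have "\<bar>\<Sum>i\<in>UNIV. kperp lam act k (xv i) x * a i\<bar> \<le> (\<Sum>i\<in>UNIV. \<bar>kperp lam act k (xv i) x * a i\<bar>)" by (rule sum_abs)
    also have "\<dots> \<le> (\<Sum>i\<in>UNIV. 2 * (SUP x. k x x) * \<bar>a i\<bar>)"
      by (intro sum_mono) (simp add: abs_mult mult_right_mono kperp_bound)
    finally have "\<bar>\<Sum>i\<in>UNIV. kperp lam act k (xv i) x * a i\<bar> \<le> (\<Sum>i\<in>UNIV. 2 * (SUP x. k x x) * \<bar>a i\<bar>)" .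
    then have "\<bar>\<Sum>i\<in>UNIV. kperp lam act k (xv i) x * a i\<bar>^2 \<le> (\<Sum>i\<in>UNIV. 2 * (SUP x. k x x) * \<bar>a i\<bar>)^2"
      by (rule power_mono) simp
    then have "(\<Sum>i\<in>UNIV. kperp lam act k (xv i) x * a i)^2 \<le> (\<Sum>i\<in>UNIV. 2 * (SUP x. k x x) * \<bar>a i\<bar>)^2"
      by simp
    then show "norm ((\<Sum>i\<in>UNIV. kperp lam act k (xv i) x * a i)^2) \<le> (\<Sum>i\<in>UNIV. 2 * (SUP x. k x x) * \<bar>a i\<bar>)^2"
      by simp
  qed
qed measurable

lemma trace_bound:
  fixes xv :: "'n::finite \<Rightarrow> 'x"
  shows "(\<Sum>a\<in>UNIV. Bm xv a a) \<ge> (\<Sum>i\<in>UNIV. Jm xv $ i $ i) / (real CARD('n) * (SUP x. k x x) + rho)^2"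
proof -
  define D where "D = real CARD('n) * (SUP x. k x x) + rho"
  have D0: "D > 0" unfolding D_def by (rule Dp_pos)
  define Ci where "Ci = matrix_inv (Cm xv)"
  define kp where "kp = (\<lambda>i x. kperp lam act k (xv i) x)"
  have B_eq: "Bm xv a a = (\<integral>x. (\<Sum>i\<in>UNIV. kp i x * Ci$i$a)^2 \<partial>mu)" for a
  proof -
    have "Bm xv a a = (\<chi> i. Ci$i$a) \<bullet> (Jm xv *v (\<chi> i. Ci$i$a))"
      by (simp add: inner_mv_sum Bm_def Ci_def)
    also have "\<dots> = (\<integral>x. (\<Sum>i\<in>UNIV. kp i x * Ci$i$a)^2 \<partial>mu)"
      by (simp add: quadJ kp_def)
    finally show ?thesis .
  qed
  have J_eq: "Jm xv $ i $ i = (\<integral>x. (kp i x)^2 \<partial>mu)" for i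
    by (simp add: Jm_def kp_def power2_eq_square)
  have pw: "(\<Sum>a\<in>UNIV. (\<Sum>i\<in>UNIV. kp i x * Ci$i$a)^2) \<ge> (\<Sum>i\<in>UNIV. (kp i x)^2) / D^2" for x
  proof -
    define v where "v = (\<chi> i. kp i x)"
    have sym: "Ci$a$i = Ci$i$a" for a i
      using Ci_facts(3)[of xv] unfolding Ci_def[symmetric]
      by (metis transpose_def vec_lambda_beta)
    have comp: "(Ci *v v)$a = (\<Sum>i\<in>UNIV. kp i x * Ci$i$a)" for a
    proof -
      have "(Ci *v v)$a = (\<Sum>i\<in>UNIV. Ci$a$i * kp i x)" by (simp add: matrix_vector_mult_def v_def)
      also have "\<dots> = (\<Sum>i\<in>UNIV. kp i x * Ci$i$a)" by (intro sum.cong refl) (simp only: sym[of a] mult.commute)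
      finally show ?thesis .
    qed
    have "norm v \<le> D * norm (Ci *v v)" unfolding D_def Ci_def by (rule Ci_facts(1))
    then have "norm v ^ 2 \<le> (D * norm (Ci *v v))^2" by (simp add: power_mono)
    then have "norm v ^ 2 / D^2 \<le> norm (Ci *v v) ^ 2" using D0 by (simp add: field_simps power_mult_distrib)
    moreover have "norm v ^ 2 = (\<Sum>i\<in>UNIV. (kp i x)^2)" by (simp add: norm_sq_sum v_def)
    moreover have "norm (Ci *v v) ^ 2 = (\<Sum>a\<in>UNIV. (\<Sum>i\<in>UNIV. kp i x * Ci$i$a)^2)" by (simp add: norm_sq_sum comp)
    ultimately show ?thesis by simp
  qed
  have int1: "integrable mu (\<lambda>x. (\<Sum>i\<in>UNIV. kp i x * Ci$i$a)^2)" for a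
    unfolding kp_def by (rule sqsum_int)
  have int2: "integrable mu (\<lambda>x. (kp i x)^2)" for i
    using sqsum_int[of xv "\<lambda>j. if j = i then 1 else 0"] by (simp add: kp_def if_distrib cong: if_cong)
  have "(\<Sum>i\<in>UNIV. Jm xv $ i $ i) / D^2 = (\<integral>x. (\<Sum>i\<in>UNIV. (kp i x)^2) / D^2 \<partial>mu)"
    using int2 by (simp add: J_eq Bochner_Integration.integral_sum)
  also have "\<dots> \<le> (\<integral>x. (\<Sum>a\<in>UNIV. (\<Sum>i\<in>UNIV. kp i x * Ci$i$a)^2) \<partial>mu)"
    by (rule integral_mono) (use int1 int2 pw in auto)
  also have "\<dots> = (\<Sum>a\<in>UNIV. Bm xv a a)"
    using int1 by (simp add: B_eq Bochner_Integration.integral_sum)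
  finally show ?thesis unfolding D_def .
qed

lemma eig_bound:
  fixes xv :: "'n::finite \<Rightarrow> 'x" and F :: "real^'n"
  assumes eig: "\<forall>ev. mat_eigenvalue (Jm xv) ev \<longrightarrow> ev \<ge> c"
  shows "(\<Sum>a\<in>UNIV. \<Sum>b\<in>UNIV. F$a * F$b * Bm xv a b) \<ge> max c 0 * (\<Sum>a\<in>UNIV. (F$a)^2) / (real CARD('n) * (SUP x. k x x) + rho)^2"
proof -
  define D where "D = real CARD('n) * (SUP x. k x x) + rho"
  have D0: "D > 0" unfolding D_def by (rule Dp_pos)
  define Ci where "Ci = matrix_inv (Cm xv)"
  define u where "u = Ci *v F"
  have "(\<Sum>a\<in>UNIV. \<Sum>b\<in>UNIV. F$a * F$b * Bm xv a b) = u \<bullet> (Jm xv *v u)"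
    unfolding u_def quad_expand Bm_def Ci_def ..
  also have "\<dots> \<ge> max c 0 * norm u ^ 2"
  proof (cases "c \<le> 0")
    case True then show ?thesis using J_psd[of u xv] by simp
  next
    case False
    have "u \<bullet> (Jm xv *v u) \<ge> c * norm u ^ 2" by (rule rayleigh[OF J_sym eig])
    then show ?thesis using False by simp
  qed
  finally have 1: "(\<Sum>a\<in>UNIV. \<Sum>b\<in>UNIV. F$a * F$b * Bm xv a b) \<ge> max c 0 * norm u ^ 2" .
  have "norm F \<le> D * norm u" unfolding D_def u_def Ci_def by (rule Ci_facts(1))
  then have "norm F ^ 2 \<le> (D * norm u)^2" by (simp add: power_mono)
  then have "norm F ^ 2 / D^2 \<le> norm u ^ 2" using D0 by (simp add: field_simps power_mult_distrib)
  then have "max c 0 * (norm F ^ 2 / D^2) \<le> max c 0 * norm u ^ 2" by (rule mult_left_mono) simp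
  with 1 have "max c 0 * (norm F ^ 2 / D^2) \<le> (\<Sum>a\<in>UNIV. \<Sum>b\<in>UNIV. F$a * F$b * Bm xv a b)" by linarith
  then show ?thesis by (simp add: norm_sq_sum D_def)
qed


lemma risk_identity:
  fixes xv :: "'n::finite \<Rightarrow> 'x" and Ys :: "'n \<Rightarrow> real" and Q :: "'t measure" and sigma :: real
  assumes Q_prob: "prob_space Q"
    and Xt_meas: "Xt \<in> measurable Q borel"
    and Xt_distr: "distr Q borel Xt = mu"
    and xit_meas: "xit \<in> borel_measurable Q"
    and xit_L2: "integrable Q (\<lambda>t. (xit t)\<^sup>2)"
    and xit_mean: "AE t in Q. real_cond_exp Q (vimage_algebra (space Q) Xt borel) xit t = 0"
    and xit_var: "(\<integral>t. (xit t)\<^sup>2 \<partial>Q) = sigma\<^sup>2"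
    and fsm: "fstar \<in> borel_measurable borel" and fs2: "integrable mu (\<lambda>x. (fstar x)\<^sup>2)"
    and finv: "\<And>g. AE x in mu. fstar (act g x) = fstar x"
  shows "risk Q Xt xit fstar (krr k rho xv Ys) - risk Q Xt xit fstar (avg_op lam act (krr k rho xv Ys))
      = (\<Sum>a\<in>UNIV. \<Sum>b\<in>UNIV. Ys a * Ys b * Bm xv a b)"
proof -
  note [measurable] = fsm
  have rb: "risk Q Xt xit fstar h = (\<integral>x. (h x - fstar x)^2 \<partial>mu) + sigma^2"
    if hm[measurable]: "h \<in> borel_measurable borel" and hb: "\<And>x. \<bar>h x\<bar> \<le> B" for h B
  proof -
    have B0: "B \<ge> 0" using hb[of undefined] by linarith
    have phi2: "integrable mu (\<lambda>x. (h x - fstar x)^2)"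
    proof (rule Bochner_Integration.integrable_bound)
      show "integrable mu (\<lambda>x. 2 * B^2 + 2 * (fstar x)^2)" using fs2 by auto
      show "AE x in mu. norm ((h x - fstar x)^2) \<le> norm (2 * B^2 + 2 * (fstar x)^2)"
      proof (rule AE_I2)
        fix x
        have "\<bar>h x\<bar>^2 \<le> B^2" using hb[of x] by (rule power_mono) simp
        then have "(h x)^2 \<le> B^2" by simp
        moreover have "(h x - fstar x)^2 \<le> 2 * (h x)^2 + 2 * (fstar x)^2"
          using zero_le_square[of "h x + fstar x"] by (simp add: power2_eq_square algebra_simps)
        ultimately show "norm ((h x - fstar x)^2) \<le> norm (2 * B^2 + 2 * (fstar x)^2)" by simp
      qed
    qed measurable
    have "risk Q Xt xit fstar h = (\<integral>t. ((\<lambda>x. h x - fstar x) (Xt t) - xit t)^2 \<partial>Q)"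
      unfolding risk_def by (simp add: algebra_simps)
    also have "\<dots> = (\<integral>x. (h x - fstar x)^2 \<partial>mu) + sigma^2"
      by (rule risk_eq[OF Q_prob Xt_meas Xt_distr xit_meas xit_L2 xit_mean xit_var]) (use phi2 in auto)
    finally show ?thesis .
  qed
  define \<alpha> where "\<alpha> = matrix_inv (Cm xv) *v (\<chi> i. Ys i)"
  have f_eq: "krr k rho xv Ys = (\<lambda>x. (\<chi> i. k (xv i) x) \<bullet> \<alpha>)"
    by (simp add: krr_def \<alpha>_def Cm_def fun_eq_iff)
  define f where "f = (\<lambda>x. (\<chi> i. k (xv i) x) \<bullet> \<alpha>)"
  define B where "B = (\<Sum>i\<in>UNIV. \<bar>\<alpha>$i\<bar>) * (SUP x. k x x)"
  have fm[measurable]: "f \<in> borel_measurable borel" unfolding f_def by measurable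
  have fb: "\<bar>f x\<bar> \<le> B" for x unfolding f_def B_def by (rule lin_bound)
  have Ofb: "\<bar>avg_op lam act f x\<bar> \<le> B" for x by (rule avg_bound[OF fm fb])
  have "risk Q Xt xit fstar f - risk Q Xt xit fstar (avg_op lam act f)
      = (\<integral>x. (f x - fstar x)^2 \<partial>mu) - (\<integral>x. (avg_op lam act f x - fstar x)^2 \<partial>mu)"
    using rb[OF fm fb] rb[OF avg_meas[OF fm] Ofb] by simp
  also have "\<dots> = (\<integral>x. (f x - avg_op lam act f x)^2 \<partial>mu)"
    by (rule risk_diff_core[OF fm fb fsm fs2 finv])
  also have "\<dots> = \<alpha> \<bullet> (Jm xv *v \<alpha>)"
    unfolding f_def Jm_def by (rule norm_diff_lin)
  also have "\<dots> = (\<Sum>a\<in>UNIV. \<Sum>b\<in>UNIV. Ys a * Ys b * Bm xv a b)"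
    unfolding \<alpha>_def quad_expand Bm_def by simp
  finally show ?thesis unfolding f_eq f_def .
qed

end


theorem corollary5p4:
  fixes gmul :: "'g::{second_countable_topology,t2_space} \<Rightarrow> 'g \<Rightarrow> 'g"
    and e :: 'g and ginv :: "'g \<Rightarrow> 'g"
    and lam :: "'g measure"
    and act :: "'g \<Rightarrow> 'x::polish_space \<Rightarrow> 'x"
    and mu :: "'x measure"
    and k :: "'x \<Rightarrow> 'x \<Rightarrow> real"
    and P :: "'w measure"
    and X :: "'n::finite \<Rightarrow> 'w \<Rightarrow> 'x"
    and xi :: "'n \<Rightarrow> 'w \<Rightarrow> real"
    and fstar :: "'x \<Rightarrow> real"
    and sigma rho c :: real
    and Q :: "'t measure" and Xt :: "'t \<Rightarrow> 'x" and xit :: "'t \<Rightarrow> real"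
    and f' :: "'w \<Rightarrow> 'x \<Rightarrow> real"
  assumes G: "compact_topological_group gmul e ginv"
    and haar: "haar_probability lam gmul"
    and action: "measurable_group_action gmul e act"
    and mu_sets: "sets mu = sets borel" and mu_prob: "prob_space mu"
    and mu_inv: "\<forall>g. \<forall>A\<in>sets borel. emeasure mu (act g -` A) = emeasure mu A"
    and mu_supp: "\<forall>U. open U \<and> U \<noteq> {} \<longrightarrow> emeasure mu U > 0"
    and kernel: "pd_kernel k"
    and k_cont: "\<forall>x. continuous_on UNIV (\<lambda>y. k y x)"
    and k_bdd: "bdd_above (range (\<lambda>x. k x x))"
    and P_prob: "prob_space P"
    and X_meas: "\<forall>i. X i \<in> measurable P borel"
    and X_distr: "\<forall>i. distr P borel (X i) = mu"
    and X_indep: "prob_space.indep_vars P (\<lambda>_. borel) X UNIV"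
    and fstar_L2: "fstar \<in> borel_measurable mu" "integrable mu (\<lambda>x. (fstar x)\<^sup>2)"
    and fstar_inv: "\<forall>g. AE x in mu. fstar (act g x) = fstar x"
    and xi_meas: "\<forall>i. xi i \<in> borel_measurable P"
    and xi_L2: "\<forall>i. integrable P (\<lambda>w. (xi i w)\<^sup>2)"
    and xi_mean: "\<forall>i. AE w in P.
          real_cond_exp P (vimage_algebra (space P) (\<lambda>w i. X i w) (Pi\<^sub>M UNIV (\<lambda>_. borel))) (xi i) w = 0"
    and xi_cov: "\<forall>i j. AE w in P.
          real_cond_exp P (vimage_algebra (space P) (\<lambda>w i. X i w) (Pi\<^sub>M UNIV (\<lambda>_. borel)))
            (\<lambda>w. xi i w * xi j w) w = (if i = j then sigma\<^sup>2 else 0)"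
    and Q_prob: "prob_space Q"
    and Xt_meas: "Xt \<in> measurable Q borel"
    and Xt_distr: "distr Q borel Xt = mu"
    and xit_meas: "xit \<in> borel_measurable Q"
    and xit_L2: "integrable Q (\<lambda>t. (xit t)\<^sup>2)"
    and xit_mean: "AE t in Q. real_cond_exp Q (vimage_algebra (space Q) Xt borel) xit t = 0"
    and xit_var: "(\<integral>t. (xit t)\<^sup>2 \<partial>Q) = sigma\<^sup>2"
    and rho_pos: "rho > 0"
    and f'_L2: "\<forall>w\<in>space P. f' w \<in> borel_measurable mu \<and> integrable mu (\<lambda>x. (f' w x)\<^sup>2)"
    and f'_risk: "\<forall>w\<in>space P.
          risk Q Xt xit fstar (f' w)
          \<le> risk Q Xt xit fstar
               (avg_op lam act (krr k rho (\<lambda>i. X i w) (\<lambda>i. fstar (X i w) + xi i w)))"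
    and eig: "AE w in P. \<forall>lam_ev. mat_eigenvalue
                 (\<chi> i j. \<integral>x. kperp lam act k (X i w) x * kperp lam act k (X j w) x \<partial>mu) lam_ev
               \<longrightarrow> lam_ev \<ge> c"
  shows "ennreal (((\<integral>x. (fstar x)\<^sup>2 \<partial>mu) * c
              + sigma\<^sup>2 * (\<integral>x. \<integral>y. (kperp lam act k x y)\<^sup>2 \<partial>mu \<partial>mu))
            / (sqrt (real CARD('n)) * (SUP x. k x x) + rho / sqrt (real CARD('n)))\<^sup>2)
         \<le> (\<integral>\<^sup>+ w. ennreal
               (risk Q Xt xit fstar (krr k rho (\<lambda>i. X i w) (\<lambda>i. fstar (X i w) + xi i w))
                - risk Q Xt xit fstar (f' w)) \<partial>P)"
proof -
  interpret S: setting2 gmul e ginv lam act mu k rho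
    unfolding setting2_def setting_def setting2_axioms_def
    using G haar action mu_sets mu_prob mu_inv kernel k_bdd rho_pos by blast
  interpret P: prob_space P by (rule P_prob)
  define n where "n = real CARD('n)"
  define Mk where "Mk = (SUP x. k x x)"
  define D where "D = n * Mk + rho"
  have n1: "n \<ge> 1" unfolding n_def by simp
  have Mk0: "Mk \<ge> 0" unfolding Mk_def by (rule S.M_nonneg)
  have D0: "D > 0" unfolding D_def n_def Mk_def by (rule S.Dp_pos)
  define Xv where "Xv = (\<lambda>w i. X i w)"
  define PB where "PB = (Pi\<^sub>M (UNIV::'n set) (\<lambda>_. borel :: 'x measure))"
  define F where "F = vimage_algebra (space P) Xv PB"
  have fsm[measurable]: "fstar \<in> borel_measurable borel"
    using fstar_L2(1) measurable_cong_sets[OF mu_sets refl] by blast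
  have Xm[measurable]: "X i \<in> measurable P borel" for i using X_meas by blast
  have xim[measurable]: "xi i \<in> borel_measurable P" for i using xi_meas by blast
  have XvP: "Xv \<in> measurable P PB"
    unfolding PB_def Xv_def by (rule measurable_PiM_single') (auto simp: space_PiM)
  have subalg: "subalgebra P F"
    unfolding subalgebra_def F_def using sets_image_in_sets[OF refl XvP] by simp
  interpret SF: sigma_finite_subalgebra P F
    by (rule finite_measure_subalgebra_is_sigma_finite)
       (simp add: finite_measure_subalgebra_def finite_measure_subalgebra_axioms_def subalg P.finite_measure_axioms)
  have XvF: "Xv \<in> measurable F PB" unfolding F_def by (rule measurable_vimage_algebra1) (simp add: PB_def space_PiM)
  have PF: "g \<in> borel_measurable P" if "g \<in> borel_measurable F" for g :: "'w \<Rightarrow> real"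
    by (rule measurable_from_subalg[OF subalg that])
  define Bd where "Bd = S.Bd TYPE('n)"
  have Bb: "\<bar>S.Bm xv a b\<bar> \<le> Bd" for xv :: "'n \<Rightarrow> 'x" and a b unfolding Bd_def by (rule S.B_bound)
  have Bd0: "Bd \<ge> 0" using Bb[of undefined undefined undefined] by linarith
  have BF: "(\<lambda>w. S.Bm (Xv w) a b) \<in> borel_measurable F" for a b
    using measurable_compose[OF XvF[unfolded PB_def] S.Bm_meas] .
  have BP[measurable]: "(\<lambda>w. S.Bm (Xv w) a b) \<in> borel_measurable P" for a b by (rule PF[OF BF])
  have FF: "(\<lambda>w. fstar (X a w)) \<in> borel_measurable F" for a
  proof -
    have "(\<lambda>xv. fstar (xv a)) \<in> borel_measurable PB" unfolding PB_def by measurable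
    from measurable_compose[OF XvF this] show ?thesis by (simp add: Xv_def)
  qed
  have int3: "integrable P (\<lambda>w. b w * (p w * q w))"
    if [measurable]: "b \<in> borel_measurable P" "p \<in> borel_measurable P" "q \<in> borel_measurable P"
      and bb: "\<And>w. \<bar>b w\<bar> \<le> Bd" and p2: "integrable P (\<lambda>w. (p w)^2)" and q2: "integrable P (\<lambda>w. (q w)^2)" for b p q
  proof (rule Bochner_Integration.integrable_bound)
    show "integrable P (\<lambda>w. Bd * ((p w)^2 + (q w)^2))" using p2 q2 by auto
    show "AE w in P. norm (b w * (p w * q w)) \<le> norm (Bd * ((p w)^2 + (q w)^2))"
    proof (rule AE_I2)
      fix w
      have "\<bar>b w\<bar> * \<bar>p w * q w\<bar> \<le> Bd * ((p w)^2 + (q w)^2)"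
        by (intro mult_mono bb abs_prod_le_sq) (auto simp: Bd0)
      then show "norm (b w * (p w * q w)) \<le> norm (Bd * ((p w)^2 + (q w)^2))"
        using Bd0 by (simp add: abs_mult)
    qed
    show "(\<lambda>w. b w * (p w * q w)) \<in> borel_measurable P" by measurable
  qed
  have F2: "integrable P (\<lambda>w. (fstar (X a w))^2)" for a
    using fstar_L2(2) integrable_distr_eq[OF Xm, of "\<lambda>x. (fstar x)^2" a] X_distr by simp
  have F2i: "(\<integral>w. (fstar (X a w))^2 \<partial>P) = (\<integral>x. (fstar x)^2 \<partial>mu)" for a
    using integral_distr[OF Xm, of "\<lambda>x. (fstar x)^2" a] X_distr by simp
  have xi2: "integrable P (\<lambda>w. (xi a w)^2)" for a using xi_L2 by blast
  have sqle: "(u + v)^2 \<le> 2 * u^2 + 2 * v^2" for u v :: real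
    using zero_le_square[of "u - v"] by (simp add: power2_eq_square algebra_simps)
  have Y2: "integrable P (\<lambda>w. (fstar (X a w) + xi a w)^2)" for a
  proof (rule Bochner_Integration.integrable_bound)
    show "integrable P (\<lambda>w. 2 * (fstar (X a w))^2 + 2 * (xi a w)^2)" using F2 xi2 by auto
    show "AE w in P. norm ((fstar (X a w) + xi a w)^2) \<le> norm (2 * (fstar (X a w))^2 + 2 * (xi a w)^2)"
      by (rule AE_I2) (simp add: sqle)
    show "(\<lambda>w. (fstar (X a w) + xi a w)^2) \<in> borel_measurable P" by measurable
  qed
  have CE: "real_cond_exp P (vimage_algebra (space P) (\<lambda>w i. X i w) (Pi\<^sub>M UNIV (\<lambda>_. borel))) = real_cond_exp P F"
    by (simp add: F_def Xv_def PB_def)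
  have cond0: "(\<integral>w. g w * xi b w \<partial>P) = 0"
    if gF: "g \<in> borel_measurable F" and gi: "integrable P (\<lambda>w. g w * xi b w)" for g b
  proof -
    have "(\<integral>w. g w * xi b w \<partial>P) = (\<integral>w. g w * real_cond_exp P F (xi b) w \<partial>P)"
      using SF.real_cond_exp_intg(2)[OF gi gF xim] by simp
    also have "\<dots> = (\<integral>w. 0 \<partial>P)"
    proof (rule integral_cong_AE)
      show "AE w in P. g w * real_cond_exp P F (xi b) w = 0"
        using xi_mean[rule_format, of b] unfolding CE by eventually_elim simp
    qed (use PF[OF gF] in auto)
    finally show ?thesis by simp
  qed
  have condcov: "(\<integral>w. g w * (xi a w * xi b w) \<partial>P) = (if a = b then sigma^2 * (\<integral>w. g w \<partial>P) else 0)"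
    if gF: "g \<in> borel_measurable F" and gi: "integrable P (\<lambda>w. g w * (xi a w * xi b w))" for g a b
  proof -
    have m: "(\<lambda>w. xi a w * xi b w) \<in> borel_measurable P" by measurable
    have "(\<integral>w. g w * (xi a w * xi b w) \<partial>P) = (\<integral>w. g w * real_cond_exp P F (\<lambda>w. xi a w * xi b w) w \<partial>P)"
      using SF.real_cond_exp_intg(2)[OF gi gF m] by simp
    also have "\<dots> = (\<integral>w. g w * (if a = b then sigma^2 else 0) \<partial>P)"
    proof (rule integral_cong_AE)
      show "AE w in P. g w * real_cond_exp P F (\<lambda>w. xi a w * xi b w) w = g w * (if a = b then sigma^2 else 0)"
        using xi_cov[rule_format, of a b] unfolding CE by eventually_elim simp
    qed (use PF[OF gF] in auto)
    finally show ?thesis by simp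
  qed
  have FP[measurable]: "(\<lambda>w. fstar (X a w)) \<in> borel_measurable P" for a by measurable
  have Eab: "(\<integral>w. (fstar (X a w) + xi a w) * (fstar (X b w) + xi b w) * S.Bm (Xv w) a b \<partial>P)
      = (\<integral>w. fstar (X a w) * fstar (X b w) * S.Bm (Xv w) a b \<partial>P)
        + (if a = b then sigma^2 * (\<integral>w. S.Bm (Xv w) a a \<partial>P) else 0)" for a b
  proof -
    have i1: "integrable P (\<lambda>w. S.Bm (Xv w) a b * (fstar (X a w) * fstar (X b w)))"
      by (rule int3) (auto simp: Bb F2)
    have i2: "integrable P (\<lambda>w. S.Bm (Xv w) a b * (fstar (X a w) * xi b w))"
      by (rule int3) (auto simp: Bb F2 xi2)
    have i3: "integrable P (\<lambda>w. S.Bm (Xv w) a b * (fstar (X b w) * xi a w))"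
      by (rule int3) (auto simp: Bb F2 xi2)
    have i4: "integrable P (\<lambda>w. S.Bm (Xv w) a b * (xi a w * xi b w))"
      by (rule int3) (auto simp: Bb xi2)
    have "(\<integral>w. (fstar (X a w) + xi a w) * (fstar (X b w) + xi b w) * S.Bm (Xv w) a b \<partial>P)
      = (\<integral>w. S.Bm (Xv w) a b * (fstar (X a w) * fstar (X b w)) + S.Bm (Xv w) a b * (fstar (X a w) * xi b w)
           + S.Bm (Xv w) a b * (fstar (X b w) * xi a w) + S.Bm (Xv w) a b * (xi a w * xi b w) \<partial>P)"
      by (rule Bochner_Integration.integral_cong) (auto simp: algebra_simps)
    also have "\<dots> = (\<integral>w. S.Bm (Xv w) a b * (fstar (X a w) * fstar (X b w)) \<partial>P)
        + (\<integral>w. S.Bm (Xv w) a b * (fstar (X a w) * xi b w) \<partial>P)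
        + (\<integral>w. S.Bm (Xv w) a b * (fstar (X b w) * xi a w) \<partial>P)
        + (\<integral>w. S.Bm (Xv w) a b * (xi a w * xi b w) \<partial>P)"
      using i1 i2 i3 i4 by simp
    also have "(\<integral>w. S.Bm (Xv w) a b * (fstar (X a w) * xi b w) \<partial>P) = 0"
    proof -
      have "(\<integral>w. S.Bm (Xv w) a b * (fstar (X a w) * xi b w) \<partial>P) = (\<integral>w. (S.Bm (Xv w) a b * fstar (X a w)) * xi b w \<partial>P)"
        by (simp add: mult.assoc)
      also have "\<dots> = 0"
        by (rule cond0) (use i2 BF FF in \<open>auto simp: mult.assoc\<close>)
      finally show ?thesis .
    qed
    also have "(\<integral>w. S.Bm (Xv w) a b * (fstar (X b w) * xi a w) \<partial>P) = 0"
    proof -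
      have "(\<integral>w. S.Bm (Xv w) a b * (fstar (X b w) * xi a w) \<partial>P) = (\<integral>w. (S.Bm (Xv w) a b * fstar (X b w)) * xi a w \<partial>P)"
        by (simp add: mult.assoc)
      also have "\<dots> = 0"
        by (rule cond0) (use i3 BF FF in \<open>auto simp: mult.assoc\<close>)
      finally show ?thesis .
    qed
    also have "(\<integral>w. S.Bm (Xv w) a b * (xi a w * xi b w) \<partial>P) = (if a = b then sigma^2 * (\<integral>w. S.Bm (Xv w) a b \<partial>P) else 0)"
      by (rule condcov[OF BF i4])
    finally show ?thesis by (simp add: mult_ac)
  qed
  define G where "G = (\<lambda>w. \<Sum>a\<in>UNIV. \<Sum>b\<in>UNIV. (fstar (X a w) + xi a w) * (fstar (X b w) + xi b w) * S.Bm (Xv w) a b)"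
  have iYYB: "integrable P (\<lambda>w. (fstar (X a w) + xi a w) * (fstar (X b w) + xi b w) * S.Bm (Xv w) a b)" for a b
  proof -
    have "integrable P (\<lambda>w. S.Bm (Xv w) a b * ((fstar (X a w) + xi a w) * (fstar (X b w) + xi b w)))"
      by (rule int3) (auto simp: Bb Y2)
    then show ?thesis by (simp add: mult_ac)
  qed
  have iFFB: "integrable P (\<lambda>w. fstar (X a w) * fstar (X b w) * S.Bm (Xv w) a b)" for a b
  proof -
    have "integrable P (\<lambda>w. S.Bm (Xv w) a b * (fstar (X a w) * fstar (X b w)))"
      by (rule int3) (auto simp: Bb F2)
    then show ?thesis by (simp add: mult_ac)
  qed
  have iB: "integrable P (\<lambda>w. S.Bm (Xv w) a b)" for a b
    by (rule P.integrable_const_bound[where B=Bd]) (auto simp: Bb)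
  have intG: "integrable P G" unfolding G_def using iYYB by auto
  define A where "A = (\<integral>w. (\<Sum>a\<in>UNIV. \<Sum>b\<in>UNIV. fstar (X a w) * fstar (X b w) * S.Bm (Xv w) a b) \<partial>P)"
  define T where "T = (\<integral>w. (\<Sum>a\<in>UNIV. S.Bm (Xv w) a a) \<partial>P)"
  have EG: "(\<integral>w. G w \<partial>P) = A + sigma^2 * T"
  proof -
    have "(\<integral>w. G w \<partial>P) = (\<Sum>a\<in>UNIV. \<Sum>b\<in>UNIV. \<integral>w. (fstar (X a w) + xi a w) * (fstar (X b w) + xi b w) * S.Bm (Xv w) a b \<partial>P)"
      unfolding G_def using iYYB by (simp add: Bochner_Integration.integral_sum)
    also have "\<dots> = (\<Sum>a\<in>UNIV. \<Sum>b\<in>UNIV. (\<integral>w. fstar (X a w) * fstar (X b w) * S.Bm (Xv w) a b \<partial>P)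
        + (if a = b then sigma^2 * (\<integral>w. S.Bm (Xv w) a a \<partial>P) else 0))"
      by (simp add: Eab)
    also have "\<dots> = (\<Sum>a\<in>UNIV. \<Sum>b\<in>UNIV. (\<integral>w. fstar (X a w) * fstar (X b w) * S.Bm (Xv w) a b \<partial>P))
        + sigma^2 * (\<Sum>a\<in>UNIV. \<integral>w. S.Bm (Xv w) a a \<partial>P)"
      by (simp add: sum.distrib sum_distrib_left)
    also have "\<dots> = A + sigma^2 * T"
      unfolding A_def T_def using iFFB iB by (simp add: Bochner_Integration.integral_sum)
    finally show ?thesis .
  qed
  define N2 where "N2 = (\<integral>x. (fstar x)^2 \<partial>mu)"
  define K2 where "K2 = (\<integral>x. \<integral>y. (kperp lam act k x y)^2 \<partial>mu \<partial>mu)"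
  define c' where "c' = max c 0"
  have N20: "N2 \<ge> 0" unfolding N2_def by simp
  have JX: "S.Jm (Xv w) = (\<chi> i j. \<integral>x. kperp lam act k (X i w) x * kperp lam act k (X j w) x \<partial>mu)" for w
    by (simp add: S.Jm_def Xv_def)
  have A_lb: "A \<ge> c' * n * N2 / D^2"
  proof -
    have "c' * n * N2 / D^2 = (\<integral>w. c' * (\<Sum>a\<in>UNIV. (fstar (X a w))^2) / D^2 \<partial>P)"
      using F2 by (simp add: Bochner_Integration.integral_sum F2i N2_def n_def)
    also have "\<dots> \<le> A" unfolding A_def
    proof (rule integral_mono_AE)
      show "integrable P (\<lambda>w. c' * (\<Sum>a\<in>UNIV. (fstar (X a w))^2) / D^2)" using F2 by auto
      show "integrable P (\<lambda>w. \<Sum>a\<in>UNIV. \<Sum>b\<in>UNIV. fstar (X a w) * fstar (X b w) * S.Bm (Xv w) a b)"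
        using iFFB by auto
      show "AE w in P. c' * (\<Sum>a\<in>UNIV. (fstar (X a w))^2) / D^2
          \<le> (\<Sum>a\<in>UNIV. \<Sum>b\<in>UNIV. fstar (X a w) * fstar (X b w) * S.Bm (Xv w) a b)"
        using eig
      proof eventually_elim
        case (elim w)
        then have e: "\<forall>ev. mat_eigenvalue (S.Jm (Xv w)) ev \<longrightarrow> ev \<ge> c" by (simp add: JX)
        show ?case
          using S.eig_bound[OF e, of "\<chi> a. fstar (X a w)"] by (simp add: c'_def D_def n_def Mk_def)
      qed
    qed
    finally show ?thesis .
  qed
  define psi where "psi = (\<lambda>y. \<integral>x. (kperp lam act k y x)^2 \<partial>mu)"
  have psim[measurable]: "psi \<in> borel_measurable borel"
  proof -
    have "(\<lambda>(y, x). (kperp lam act k y x)^2) \<in> borel_measurable (borel \<Otimes>\<^sub>M mu)" by measurable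
    then show ?thesis unfolding psi_def by (rule S.mu.borel_measurable_lebesgue_integral)
  qed
  have Jii: "S.Jm (Xv w) $ i $ i = psi (X i w)" for w i
    by (simp add: S.Jm_def Xv_def psi_def power2_eq_square)
  have iJ: "integrable P (\<lambda>w. psi (X i w))" for i
    using S.J_bound[of "Xv _" i i] unfolding Jii
    by (intro P.integrable_const_bound[where B="4 * (SUP x. k x x)^2"]) auto
  have Jint: "(\<integral>w. psi (X i w) \<partial>P) = K2" for i
    using integral_distr[OF Xm psim, of i] X_distr by (simp add: K2_def psi_def)
  have T_lb: "T \<ge> n * K2 / D^2"
  proof -
    have "n * K2 / D^2 = (\<integral>w. (\<Sum>i\<in>UNIV. S.Jm (Xv w) $ i $ i) / D^2 \<partial>P)"
      using iJ by (simp add: Jii Bochner_Integration.integral_sum Jint n_def)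
    also have "\<dots> \<le> T" unfolding T_def
    proof (rule integral_mono)
      show "integrable P (\<lambda>w. (\<Sum>i\<in>UNIV. S.Jm (Xv w) $ i $ i) / D^2)" using iJ by (simp add: Jii)
      show "integrable P (\<lambda>w. \<Sum>a\<in>UNIV. S.Bm (Xv w) a a)" using iB by auto
      show "(\<Sum>i\<in>UNIV. S.Jm (Xv w) $ i $ i) / D^2 \<le> (\<Sum>a\<in>UNIV. S.Bm (Xv w) a a)" for w
        using S.trace_bound[of "Xv w"] by (simp add: D_def n_def Mk_def)
    qed
    finally show ?thesis .
  qed
  have finv: "\<And>g. AE x in mu. fstar (act g x) = fstar x" using fstar_inv by blast
  have Gpw: "G w \<le> risk Q Xt xit fstar (krr k rho (\<lambda>i. X i w) (\<lambda>i. fstar (X i w) + xi i w)) - risk Q Xt xit fstar (f' w)"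
    if w: "w \<in> space P" for w
  proof -
    have "risk Q Xt xit fstar (krr k rho (\<lambda>i. X i w) (\<lambda>i. fstar (X i w) + xi i w))
        - risk Q Xt xit fstar (avg_op lam act (krr k rho (\<lambda>i. X i w) (\<lambda>i. fstar (X i w) + xi i w))) = G w"
      using S.risk_identity[OF Q_prob Xt_meas Xt_distr xit_meas xit_L2 xit_mean xit_var fsm fstar_L2(2) finv,
          of "\<lambda>i. X i w" "\<lambda>i. fstar (X i w) + xi i w"]
      by (simp add: G_def Xv_def)
    then show ?thesis using f'_risk w by auto
  qed
  have G0: "G w \<ge> 0" for w
  proof -
    have "G w = (matrix_inv (S.Cm (Xv w)) *v (\<chi> i. fstar (X i w) + xi i w)) \<bullet>
        (S.Jm (Xv w) *v (matrix_inv (S.Cm (Xv w)) *v (\<chi> i. fstar (X i w) + xi i w)))"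
      unfolding quad_expand G_def S.Bm_def by simp
    then show ?thesis using S.J_psd by simp
  qed
  have lb: "(\<integral>w. G w \<partial>P) \<ge> (c' * N2 + sigma^2 * K2) * n / D^2"
  proof -
    have "(c' * N2 + sigma^2 * K2) * n / D^2 = c' * n * N2 / D^2 + sigma^2 * (n * K2 / D^2)"
      by (simp add: add_divide_distrib algebra_simps)
    also have "\<dots> \<le> A + sigma^2 * T"
      using A_lb T_lb by (intro add_mono mult_left_mono) auto
    finally show ?thesis using EG by simp
  qed
  define s where "s = sqrt n"
  have s0: "s > 0" and ss: "s * s = n" using n1 by (auto simp: s_def)
  define E where "E = s * Mk + rho / s"
  have E0: "E > 0" unfolding E_def using s0 Mk0 rho_pos by (simp add: add_nonneg_pos)
  have DE: "D = s * E" unfolding D_def E_def using s0 ss by (simp add: field_simps)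
  have key: "((\<integral>x. (fstar x)\<^sup>2 \<partial>mu) * c + sigma\<^sup>2 * (\<integral>x. \<integral>y. (kperp lam act k x y)\<^sup>2 \<partial>mu \<partial>mu))
            / (sqrt (real CARD('n)) * (SUP x. k x x) + rho / sqrt (real CARD('n)))\<^sup>2 \<le> (\<integral>w. G w \<partial>P)"
  proof -
    have "(N2 * c + sigma^2 * K2) / E^2 \<le> (c' * N2 + sigma^2 * K2) / E^2"
      using N20 by (intro divide_right_mono) (auto simp: c'_def mult.commute intro: mult_left_mono)
    also have "\<dots> = (c' * N2 + sigma^2 * K2) * n / D^2"
      using s0 E0 by (simp add: DE power_mult_distrib ss[symmetric] power2_eq_square)
    also have "\<dots> \<le> (\<integral>w. G w \<partial>P)" by (rule lb)
    finally show ?thesis by (simp add: N2_def K2_def E_def s_def n_def Mk_def)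
  qed
  have "ennreal (((\<integral>x. (fstar x)\<^sup>2 \<partial>mu) * c + sigma\<^sup>2 * (\<integral>x. \<integral>y. (kperp lam act k x y)\<^sup>2 \<partial>mu \<partial>mu))
            / (sqrt (real CARD('n)) * (SUP x. k x x) + rho / sqrt (real CARD('n)))\<^sup>2) \<le> ennreal (\<integral>w. G w \<partial>P)"
    using key by (rule ennreal_leI)
  also have "\<dots> = (\<integral>\<^sup>+ w. ennreal (G w) \<partial>P)"
    by (rule nn_integral_eq_integral[symmetric, OF intG]) (simp add: G0)
  also have "\<dots> \<le> (\<integral>\<^sup>+ w. ennreal
               (risk Q Xt xit fstar (krr k rho (\<lambda>i. X i w) (\<lambda>i. fstar (X i w) + xi i w))
                - risk Q Xt xit fstar (f' w)) \<partial>P)"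
    by (intro nn_integral_mono ennreal_leI Gpw)
  finally show ?thesis .
qed


end
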